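(* Fix $q\in[0,1)$. There is a constant $C>0$ depending only on $q$ such that the following holds. Let $N\in\mathbb N$, $k\in\llbracket0,N\rrbracket$, $a\in\mathbb N$, $b\in\mathbb R$, $t\ge0$, and let $X$ be an integer sufficiently large depending on $N,k,a,b$. Let $u$ be a random bijection of $\llbracket -X,X\rrbracket$ that is the identity on $\llbracket -X,-X+k-1\rrbracket$ and whose restriction to $\llbracket -X+k,X\rrbracket$ has law $\mathcal M_{-X+k,X}$; let $\ddot\zeta_0$ have the law of the $s\to\infty$ limit of the multi-species dynamics on the sites $\llbracket -X,k\rrbracket$ started from $u$ (values at sites $\llbracket k+1,X\rrbracket$ unchanged); and let $(\ddot\zeta_t)_{t\ge0}$ be the multi-species ASEP on $\llbracket -X,X\rrbracket$ started from $\ddot\zeta_0$. Write $\ddot\zeta^i_t(x)=\mathbb 1[\ddot\zeta_t(x)\le i]$. Let $\ddot{\mathcal E}$ be the event that $h\{\ddot\zeta^{-X+k-1}_t\}(N-k+a)=N-k+a$ and $h\{\ddot\zeta^{-1+k-N}_t\}(N-k+a)<N-k-a$. Then $\mathbb P[\ddot{\mathcal E}]\le Cq^{a/2}$.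
   Context: $\llbracket x,y\rrbracket$ is the set of integers in $[x,y]$. For integers $m\le n$, $\mathcal M_{m,n}$ is the Mallows measure on bijections $w$ of $\llbracket m,n\rrbracket$: $\mathcal M_{m,n}(w)\propto q^{\#\{m\le i<j\le n:\,w(i)<w(j)\}}$. Multi-species dynamics on an interval $D$ (state: injective labelling of the sites of $D$ by integers): each nearest-neighbour pair $x,x+1\in D$ independently swaps its values at rate $1$ if the value at $x$ is smaller and at rate $q$ otherwise; on $D=\llbracket -X,X\rrbracket$ with a bijection as state this is the multi-species ASEP on $\llbracket -X,X\rrbracket$. Height function: for $\omega:\llbracket m,n\rrbracket\to\{0,1\}$, $h\{\omega\}:\mathbb Z\to\mathbb Z$ is defined by extending $\omega$ by $0$ on $x<m$ and $1$ on $x>n$, setting $h\{\omega\}(x)=x$ for $x<m$ and $h\{\omega\}(x)-h\{\omega\}(x-1)=1-2\omega(x)$. *)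

theory Defs
  imports "HOL-Analysis.Analysis"
begin

definition perms :: "int \<Rightarrow> int \<Rightarrow> (int \<Rightarrow> int) set" where
  "perms m n = {w. bij_betw w {m..n} {m..n} \<and> (\<forall>x. x \<notin> {m..n} \<longrightarrow> w x = x)}"

definition ninc :: "int \<Rightarrow> int \<Rightarrow> (int \<Rightarrow> int) \<Rightarrow> nat" where
  "ninc m n w = card {(i, j). m \<le> i \<and> i < j \<and> j \<le> n \<and> w i < w j}"

definition mallows :: "real \<Rightarrow> int \<Rightarrow> int \<Rightarrow> (int \<Rightarrow> int) \<Rightarrow> real" where
  "mallows q m n w =
     (if w \<in> perms m n
      then q ^ ninc m n w / (\<Sum>v\<in>perms m n. q ^ ninc m n v) else 0)"

definition swp :: "int \<Rightarrow> (int \<Rightarrow> int) \<Rightarrow> (int \<Rightarrow> int)" where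
  "swp x w = w(x := w (x + 1), x + 1 := w x)"

definition rate :: "real \<Rightarrow> (int \<Rightarrow> int) \<Rightarrow> int \<Rightarrow> real" where
  "rate q w x = (if w x < w (x + 1) then 1 else q)"

text \<open>Generator (forward / Kolmogorov, acting on mass functions) of the multi-species
dynamics on the interval D = [lo,hi].\<close>
definition gen :: "real \<Rightarrow> int \<Rightarrow> int \<Rightarrow> ((int \<Rightarrow> int) \<Rightarrow> real) \<Rightarrow> ((int \<Rightarrow> int) \<Rightarrow> real)" where
  "gen q lo hi \<mu> \<tau> =
     (\<Sum>x\<in>{lo..<hi}. \<mu> (swp x \<tau>) * rate q (swp x \<tau>) x - \<mu> \<tau> * rate q \<tau> x)"

definition evolve :: "real \<Rightarrow> int \<Rightarrow> int \<Rightarrow> ((int \<Rightarrow> int) \<Rightarrow> real) \<Rightarrow> real \<Rightarrow> ((int \<Rightarrow> int) \<Rightarrow> real)" where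
  "evolve q lo hi \<mu> s \<tau> = (\<Sum>n. s ^ n / fact n * ((gen q lo hi ^^ n) \<mu>) \<tau>)"

definition height :: "int \<Rightarrow> int \<Rightarrow> (int \<Rightarrow> int) \<Rightarrow> int \<Rightarrow> int" where
  "height m n \<omega> y =
     (if y < m then y
      else (m - 1) + (\<Sum>x\<in>{m..y}. 1 - 2 * (if x \<le> n then \<omega> x else 1)))"

definition thr :: "int \<Rightarrow> (int \<Rightarrow> int) \<Rightarrow> int \<Rightarrow> int" where
  "thr i \<zeta> x = (if \<zeta> x \<le> i then 1 else 0)"

end

theory Submission
  imports Defs
begin


definition tr :: "int \<Rightarrow> int \<Rightarrow> int \<Rightarrow> int" where
  "tr a b z = (if z = a then b else if z = b then a else z)"

lemma tr_tr[simp]: "tr a b (tr a b z) = z" by (auto simp: tr_def)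
lemma swp_tr: "swp x w = w \<circ> tr x (x+1)" by (auto simp: swp_def tr_def fun_eq_iff)
lemma comp_tr_tr[simp]: "w \<circ> tr a b \<circ> tr a b = w" by (auto simp: fun_eq_iff)

lemma bij_tr: assumes "a \<in> S" "b \<in> S" shows "bij_betw (tr a b) S S"
  by (rule bij_betw_byWitness[where f'="tr a b"]) (use assms in \<open>auto simp: tr_def\<close>)

lemma perms_tr: assumes "\<tau> \<in> perms m n" "a \<in> {m..n}" "b \<in> {m..n}"
  shows "\<tau> \<circ> tr a b \<in> perms m n"
proof -
  have "bij_betw (\<tau> \<circ> tr a b) {m..n} {m..n}"
    using bij_betw_trans[OF bij_tr[OF assms(2,3)], of \<tau>] assms(1) unfolding perms_def by simp
  moreover have "\<forall>x. x \<notin> {m..n} \<longrightarrow> (\<tau> \<circ> tr a b) x = x"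
    using assms unfolding perms_def tr_def by auto
  ultimately show ?thesis unfolding perms_def by blast
qed

lemma perms_tr_iff: assumes "a \<in> {m..n}" "b \<in> {m..n}"
  shows "\<tau> \<circ> tr a b \<in> perms m n \<longleftrightarrow> \<tau> \<in> perms m n"
  using perms_tr[OF _ assms, of \<tau>] perms_tr[OF _ assms, of "\<tau> \<circ> tr a b"] by auto

lemma perms_inj: "\<tau> \<in> perms m n \<Longrightarrow> inj_on \<tau> {m..n}"
  unfolding perms_def bij_betw_def by auto

definition nincB :: "int \<Rightarrow> int \<Rightarrow> (int \<Rightarrow> int) \<Rightarrow> nat" where
  "nincB X b0 \<tau> = card {(i,j). -X \<le> i \<and> i < j \<and> j \<le> X \<and> b0 < \<tau> i \<and> b0 < \<tau> j \<and> \<tau> i < \<tau> j}"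

definition cnt :: "int \<Rightarrow> int \<Rightarrow> (int \<Rightarrow> int) \<Rightarrow> int \<Rightarrow> nat" where
  "cnt X b0 \<tau> j = card {i. -X \<le> i \<and> i < j \<and> b0 < \<tau> i \<and> b0 < \<tau> j \<and> \<tau> i < \<tau> j}"

lemma fin_int_range[simp]: "finite {i::int. lo \<le> i \<and> i < hi \<and> P i}"
  by (rule finite_subset[of _ "{lo..<hi}"]) auto

lemma nincB_sum: "nincB X b0 \<tau> = (\<Sum>j\<in>{-X..X}. cnt X b0 \<tau> j)"
proof -
  let ?A = "\<lambda>j. {i. -X \<le> i \<and> i < j \<and> b0 < \<tau> i \<and> b0 < \<tau> j \<and> \<tau> i < \<tau> j}"
  have eq: "{(i,j). -X \<le> i \<and> i < j \<and> j \<le> X \<and> b0 < \<tau> i \<and> b0 < \<tau> j \<and> \<tau> i < \<tau> j}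
      = (\<Union>j\<in>{-X..X}. (\<lambda>i. (i,j)) ` ?A j)"
  proof (rule set_eqI, rule iffI)
    fix z assume "z \<in> {(i,j). -X \<le> i \<and> i < j \<and> j \<le> X \<and> b0 < \<tau> i \<and> b0 < \<tau> j \<and> \<tau> i < \<tau> j}"
    moreover obtain i j where zz: "z = (i,j)" by (cases z)
    ultimately have z: "z = (i,j)" "-X \<le> i" "i < j" "j \<le> X" "b0 < \<tau> i" "b0 < \<tau> j" "\<tau> i < \<tau> j" by simp_all
    then have "j \<in> {-X..X}" "i \<in> ?A j" by auto
    then have "(i,j) \<in> (\<lambda>i. (i,j)) ` ?A j" by (intro imageI) simp
    then show "z \<in> (\<Union>j\<in>{-X..X}. (\<lambda>i. (i,j)) ` ?A j)" using z(1) \<open>j \<in> {-X..X}\<close>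
      by (rule_tac UN_I[of j]) simp_all
  next
    fix z assume "z \<in> (\<Union>j\<in>{-X..X}. (\<lambda>i. (i,j)) ` ?A j)"
    then obtain j where j: "j \<in> {-X..X}" "z \<in> (\<lambda>i. (i,j)) ` ?A j" by (rule UN_E)
    from j(2) obtain i where "z = (i,j)" "i \<in> ?A j" by (rule imageE)
    with j(1) show "z \<in> {(i,j). -X \<le> i \<and> i < j \<and> j \<le> X \<and> b0 < \<tau> i \<and> b0 < \<tau> j \<and> \<tau> i < \<tau> j}"
      by auto
  qed
  have c1: "card (\<Union>j\<in>{-X..X}. (\<lambda>i. (i,j)) ` ?A j) = (\<Sum>j\<in>{-X..X}. card ((\<lambda>i. (i,j)) ` ?A j))"
    apply (rule card_UN_disjoint)
      apply simp
     apply (intro ballI finite_imageI) apply simp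
    apply (intro ballI impI equals0I)
    apply (erule IntE)
    apply (erule imageE)
    apply (erule imageE)
    apply (metis prod.inject)
    done
  have c2: "(\<Sum>j\<in>{-X..X}. card ((\<lambda>i. (i,j)) ` ?A j)) = (\<Sum>j\<in>{-X..X}. cnt X b0 \<tau> j)"
    apply (rule sum.cong, rule refl)
    apply (unfold cnt_def)
    apply (rule card_image)
    apply (rule inj_onI)
    apply simp
    done
  show ?thesis unfolding nincB_def eq c1 c2 by (rule refl)
qed

lemma fin_int_range2[simp]: "finite {i::int. lo < i \<and> i < hi \<and> P i}"
  by (rule finite_subset[of _ "{lo<..<hi}"]) auto

lemma card_split3:
  assumes "lo \<le> c" "c < hi"
  shows "card {i::int. lo \<le> i \<and> i < hi \<and> R i} =
    card {i. lo \<le> i \<and> i < c \<and> R i} + (if R c then 1 else 0) + card {i. c < i \<and> i < hi \<and> R i}"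
proof -
  have eq: "{i::int. lo \<le> i \<and> i < hi \<and> R i} =
    ({i. lo \<le> i \<and> i < c \<and> R i} \<union> {i. i = c \<and> R i}) \<union> {i. c < i \<and> i < hi \<and> R i}"
    using assms by auto
  have f: "finite {i::int. i = c \<and> R i}" by auto
  have "card {i::int. i = c \<and> R i} = (if R c then 1 else 0)"
  proof (cases "R c")
    case True
    then have "{i::int. i = c \<and> R i} = {c}" by auto
    then show ?thesis using True by simp
  qed (auto simp: card_eq_0_iff)
  moreover have "card (({i. lo \<le> i \<and> i < c \<and> R i} \<union> {i. i = c \<and> R i}) \<union> {i. c < i \<and> i < hi \<and> R i})
     = card {i. lo \<le> i \<and> i < c \<and> R i} + card {i::int. i = c \<and> R i} + card {i. c < i \<and> i < hi \<and> R i}"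
  proof -
    have f3: "finite {i. c < i \<and> i < hi \<and> R i}" by (rule finite_subset[of _ "{c<..<hi}"]) auto
    have f1: "finite {i. lo \<le> i \<and> i < c \<and> R i}" by simp
    have d1: "{i. lo \<le> i \<and> i < c \<and> R i} \<inter> {i. i = c \<and> R i} = {}" by auto
    have d2: "({i. lo \<le> i \<and> i < c \<and> R i} \<union> {i. i = c \<and> R i}) \<inter> {i. c < i \<and> i < hi \<and> R i} = {}" by auto
    show ?thesis
      using card_Un_disjoint[OF finite_UnI[OF f1 f] f3 d2] card_Un_disjoint[OF f1 f d1] by simp
  qed
  ultimately show ?thesis unfolding eq by simp
qed



lemma tr_range:
  assumes "lo \<le> a" "a < hi" "lo \<le> b" "b < hi" "lo \<le> i" "i < hi"
  shows "lo \<le> tr a b i \<and> tr a b i < hi"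
  using assms by (auto simp: tr_def)

lemma inj_tr: "inj_on (tr a b) S"
  by (rule inj_onI) (metis tr_tr)

lemma cnt_right:
  assumes "-X \<le> a" "a < j" "-X \<le> b" "b < j"
  shows "cnt X b0 (\<tau> \<circ> tr a b) j = cnt X b0 \<tau> j"
proof -
  let ?f = "tr a b"
  have jj: "?f j = j" using assms by (auto simp: tr_def)
  let ?S = "{i. -X \<le> i \<and> i < j \<and> b0 < \<tau> i \<and> b0 < \<tau> j \<and> \<tau> i < \<tau> j}"
  let ?T = "{i. -X \<le> i \<and> i < j \<and> b0 < (\<tau> \<circ> ?f) i \<and> b0 < (\<tau> \<circ> ?f) j \<and> (\<tau> \<circ> ?f) i < (\<tau> \<circ> ?f) j}"
  have "?T = ?f ` ?S"
  proof (rule set_eqI, rule iffI)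
    fix i assume i: "i \<in> ?T"
    then have h: "-X \<le> i" "i < j" "b0 < \<tau> (?f i)" "b0 < \<tau> (?f j)" "\<tau> (?f i) < \<tau> (?f j)"
      unfolding mem_Collect_eq o_def by fast+
    have r: "-X \<le> ?f i" "?f i < j" using tr_range[OF assms h(1,2)] by auto
    have "?f i \<in> ?S" unfolding mem_Collect_eq using h r jj by metis
    then have "?f (?f i) \<in> ?f ` ?S" by (rule imageI)
    then show "i \<in> ?f ` ?S" by (simp only: tr_tr)
  next
    fix i assume "i \<in> ?f ` ?S"
    then obtain i' where ii: "i = ?f i'" "i' \<in> ?S" by (rule imageE)
    then have h: "-X \<le> i'" "i' < j" "b0 < \<tau> i'" "b0 < \<tau> j" "\<tau> i' < \<tau> j"
      unfolding mem_Collect_eq by fast+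
    have r: "-X \<le> ?f i'" "?f i' < j" using tr_range[OF assms h(1,2)] by auto
    show "i \<in> ?T" unfolding mem_Collect_eq o_def ii(1) tr_tr jj using h r by metis
  qed
  then have "card ?T = card ?S" using card_image[OF inj_tr] by simp
  then show ?thesis unfolding cnt_def by simp
qed

lemma cnt_left:
  assumes "j < a" "j < b"
  shows "cnt X b0 (\<tau> \<circ> tr a b) j = cnt X b0 \<tau> j"
proof -
  have "\<And>i. i \<le> j \<Longrightarrow> (\<tau> \<circ> tr a b) i = \<tau> i" using assms by (auto simp: tr_def)
  then have "{i. -X \<le> i \<and> i < j \<and> b0 < (\<tau> \<circ> tr a b) i \<and> b0 < (\<tau> \<circ> tr a b) j \<and> (\<tau> \<circ> tr a b) i < (\<tau> \<circ> tr a b) j}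
    = {i. -X \<le> i \<and> i < j \<and> b0 < \<tau> i \<and> b0 < \<tau> j \<and> \<tau> i < \<tau> j}"
    by (intro Collect_cong) (metis order_le_less order_refl)
  then show ?thesis unfolding cnt_def by simp
qed

lemma sum_two_split:
  assumes "finite A" "a \<in> A" "b \<in> A" "a \<noteq> b"
  shows "(\<Sum>j\<in>A. f j) = f a + f b + (\<Sum>j\<in>A - {a,b}. f j)"
proof -
  have "(\<Sum>j\<in>A. f j) = (\<Sum>j\<in>A - {a,b}. f j) + (\<Sum>j\<in>{a,b}. f j)"
    by (rule sum.subset_diff) (use assms in auto)
  then show ?thesis using assms by (simp add: add.commute)
qed

lemma nincB_tr:
  fixes \<tau> :: "int \<Rightarrow> int"
  assumes perm: "\<tau> \<in> perms (-X) X" and r: "-X \<le> i0" "i0 < p" "p \<le> X"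
    and b: "b0 < \<tau> i0" and xy: "\<tau> i0 < \<tau> p"
    and mid: "\<forall>i. i0 < i \<and> i < p \<and> b0 < \<tau> i \<longrightarrow> \<not> (\<tau> i0 < \<tau> i \<and> \<tau> i < \<tau> p)"
  shows "nincB X b0 (\<tau> \<circ> tr i0 p) + 1 = nincB X b0 \<tau>"
proof -
  define \<sigma> where "\<sigma> = \<tau> \<circ> tr i0 p"
  define x where "x = \<tau> i0"
  define y where "y = \<tau> p"
  have inj: "inj_on \<tau> {-X..X}" using perms_inj[OF perm] .
  have s0: "\<sigma> i0 = y" "\<sigma> p = x" unfolding \<sigma>_def x_def y_def tr_def by auto
  have s1: "\<And>i. i \<noteq> i0 \<Longrightarrow> i \<noteq> p \<Longrightarrow> \<sigma> i = \<tau> i" unfolding \<sigma>_def tr_def by auto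
  have bx: "b0 < x" "b0 < y" "x < y" using b xy unfolding x_def y_def by auto
  have neq: "\<And>i. i \<in> {-X..X} \<Longrightarrow> i \<noteq> p \<Longrightarrow> \<tau> i \<noteq> y"
    using inj_onD[OF inj, of _ p] r unfolding y_def by force
  have neqx: "\<And>i. i \<in> {-X..X} \<Longrightarrow> i \<noteq> i0 \<Longrightarrow> \<tau> i \<noteq> x"
    using inj_onD[OF inj, of _ i0] r unfolding x_def by force
  have midxy: "\<And>i. i0 < i \<Longrightarrow> i < p \<Longrightarrow> (b0 < \<tau> i \<and> \<tau> i < y) = (b0 < \<tau> i \<and> \<tau> i < x)"
  proof -
    fix i assume i: "i0 < i" "i < p"
    then have "i \<in> {-X..X}" using r by auto
    then have "\<tau> i \<noteq> x" "\<tau> i \<noteq> y" using neq neqx i by auto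
    then show "(b0 < \<tau> i \<and> \<tau> i < y) = (b0 < \<tau> i \<and> \<tau> i < x)"
    proof -
      have "\<not> (b0 < \<tau> i \<and> x < \<tau> i \<and> \<tau> i < y)" using mid i unfolding x_def y_def by blast
      then show ?thesis using \<open>\<tau> i \<noteq> x\<close> \<open>\<tau> i \<noteq> y\<close> bx by auto
    qed
  qed
  have cj: "\<And>j. j \<in> {-X..X} - {i0,p} \<Longrightarrow> cnt X b0 \<sigma> j = cnt X b0 \<tau> j"
  proof -
    fix j assume j: "j \<in> {-X..X} - {i0,p}"
    consider "j < i0" | "p < j" | "i0 < j \<and> j < p" using j by force
    then show "cnt X b0 \<sigma> j = cnt X b0 \<tau> j"
    proof cases
      case 1 then show ?thesis unfolding \<sigma>_def using r by (intro cnt_left) auto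
    next
      case 2 then show ?thesis unfolding \<sigma>_def using r by (intro cnt_right) auto
    next
      case 3
      have sj: "\<sigma> j = \<tau> j" using j s1 by auto
      have jI: "j \<in> {-X..X}" using j by auto
      have "\<And>i. i < j \<Longrightarrow> (b0 < \<sigma> i \<and> b0 < \<sigma> j \<and> \<sigma> i < \<sigma> j) = (b0 < \<tau> i \<and> b0 < \<tau> j \<and> \<tau> i < \<tau> j)"
      proof -
        fix i assume ij: "i < j"
        show "(b0 < \<sigma> i \<and> b0 < \<sigma> j \<and> \<sigma> i < \<sigma> j) = (b0 < \<tau> i \<and> b0 < \<tau> j \<and> \<tau> i < \<tau> j)"
        proof (cases "i = i0")
          case True
          have "\<tau> j \<noteq> x" "\<tau> j \<noteq> y" using neq neqx jI j by auto
          moreover have "\<not> (x < \<tau> j \<and> \<tau> j < y) \<or> \<not> b0 < \<tau> j" using mid[rule_format, of j] 3 unfolding x_def y_def by auto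
          ultimately show ?thesis using True s0(1) sj bx by (auto simp: x_def[symmetric])
        next
          case False
          then have "i \<noteq> p" using ij 3 by auto
          then show ?thesis using s1 False sj by simp
        qed
      qed
      then have "{i. -X \<le> i \<and> i < j \<and> b0 < \<sigma> i \<and> b0 < \<sigma> j \<and> \<sigma> i < \<sigma> j}
          = {i. -X \<le> i \<and> i < j \<and> b0 < \<tau> i \<and> b0 < \<tau> j \<and> \<tau> i < \<tau> j}"
        by (intro Collect_cong) (simp only: conj_assoc[symmetric], metis)
      then show ?thesis unfolding cnt_def by simp
    qed
  qed
  have e1: "cnt X b0 \<tau> i0 = card {i. -X \<le> i \<and> i < i0 \<and> (b0 < \<tau> i \<and> \<tau> i < x)}"
    unfolding cnt_def x_def using b by (intro arg_cong[where f=card] Collect_cong) auto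
  have e2: "cnt X b0 \<sigma> i0 = card {i. -X \<le> i \<and> i < i0 \<and> (b0 < \<tau> i \<and> \<tau> i < y)}"
    unfolding cnt_def using s0 s1 bx r by (intro arg_cong[where f=card] Collect_cong) auto
  have e3: "cnt X b0 \<tau> p = card {i. -X \<le> i \<and> i < p \<and> (b0 < \<tau> i \<and> \<tau> i < y)}"
    unfolding cnt_def y_def using b xy by (intro arg_cong[where f=card] Collect_cong) auto
  have e4: "cnt X b0 \<sigma> p = card {i. -X \<le> i \<and> i < p \<and> (b0 < \<sigma> i \<and> \<sigma> i < x)}"
    unfolding cnt_def using s0 bx by (intro arg_cong[where f=card] Collect_cong) auto
  have e3': "cnt X b0 \<tau> p = card {i. -X \<le> i \<and> i < i0 \<and> (b0 < \<tau> i \<and> \<tau> i < y)} + 1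
      + card {i. i0 < i \<and> i < p \<and> (b0 < \<tau> i \<and> \<tau> i < y)}"
    unfolding e3 using card_split3[OF r(1) r(2), of "\<lambda>i. b0 < \<tau> i \<and> \<tau> i < y"] bx x_def by simp
  have e4': "cnt X b0 \<sigma> p = card {i. -X \<le> i \<and> i < i0 \<and> (b0 < \<sigma> i \<and> \<sigma> i < x)} + 0
      + card {i. i0 < i \<and> i < p \<and> (b0 < \<sigma> i \<and> \<sigma> i < x)}"
    unfolding e4 using card_split3[OF r(1) r(2), of "\<lambda>i. b0 < \<sigma> i \<and> \<sigma> i < x"] bx s0 by simp
  have f1: "{i. -X \<le> i \<and> i < i0 \<and> (b0 < \<sigma> i \<and> \<sigma> i < x)} = {i. -X \<le> i \<and> i < i0 \<and> (b0 < \<tau> i \<and> \<tau> i < x)}"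
    using s1 r by (intro Collect_cong) auto
  have f2: "{i. i0 < i \<and> i < p \<and> (b0 < \<sigma> i \<and> \<sigma> i < x)} = {i. i0 < i \<and> i < p \<and> (b0 < \<tau> i \<and> \<tau> i < y)}"
  proof (intro Collect_cong iffI)
    fix i assume "i0 < i \<and> i < p \<and> (b0 < \<sigma> i \<and> \<sigma> i < x)"
    then show "i0 < i \<and> i < p \<and> (b0 < \<tau> i \<and> \<tau> i < y)" using s1[of i] midxy[of i] by auto
  next
    fix i assume "i0 < i \<and> i < p \<and> (b0 < \<tau> i \<and> \<tau> i < y)"
    then show "i0 < i \<and> i < p \<and> (b0 < \<sigma> i \<and> \<sigma> i < x)" using s1[of i] midxy[of i] by auto
  qed
  have ends: "cnt X b0 \<sigma> i0 + cnt X b0 \<sigma> p + 1 = cnt X b0 \<tau> i0 + cnt X b0 \<tau> p"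
    using e1 e2 e3' e4' f1 f2 by simp
  have I: "finite {-X..X}" "i0 \<in> {-X..X}" "p \<in> {-X..X}" "i0 \<noteq> p" using r by auto
  have "nincB X b0 \<sigma> + 1 = cnt X b0 \<sigma> i0 + cnt X b0 \<sigma> p + 1 + (\<Sum>j\<in>{-X..X} - {i0,p}. cnt X b0 \<sigma> j)"
    unfolding nincB_sum using sum_two_split[OF I, of "cnt X b0 \<sigma>"] by simp
  also have "\<dots> = cnt X b0 \<tau> i0 + cnt X b0 \<tau> p + (\<Sum>j\<in>{-X..X} - {i0,p}. cnt X b0 \<tau> j)"
    using ends cj by simp
  also have "\<dots> = nincB X b0 \<tau>"
    unfolding nincB_sum using sum_two_split[OF I, of "cnt X b0 \<tau>"] by simp
  finally show ?thesis unfolding \<sigma>_def .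
qed



definition fB :: "int \<Rightarrow> int \<Rightarrow> int" where "fB b0 v = (if v \<le> b0 then v else b0 + 1)"
definition bet :: "int \<Rightarrow> (int \<Rightarrow> int) \<Rightarrow> (int \<Rightarrow> int)" where "bet b0 \<tau> = (\<lambda>z. fB b0 (\<tau> z))"
definition Wt :: "real \<Rightarrow> int \<Rightarrow> int \<Rightarrow> (int \<Rightarrow> int) \<Rightarrow> real" where
  "Wt q X b0 \<tau> = (if \<tau> \<in> perms (-X) X then q ^ nincB X b0 \<tau> else 0)"

lemma fB_less: "u \<le> b0 \<or> v \<le> b0 \<Longrightarrow> (fB b0 u < fB b0 v) = (u < v)"
  unfolding fB_def by auto

lemma bet_swp: "bet b0 (swp x \<tau>) = swp x (bet b0 \<tau>)"
  unfolding bet_def swp_def by (auto simp: fun_eq_iff)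

lemma nincB_trB:
  assumes r: "-X \<le> x" "x + 1 \<le> X" and B: "\<tau> x \<le> b0 \<or> \<tau> (x+1) \<le> b0"
  shows "nincB X b0 (\<tau> \<circ> tr x (x+1)) = nincB X b0 \<tau>"
proof -
  define \<sigma> where "\<sigma> = \<tau> \<circ> tr x (x+1)"
  have s0: "\<sigma> x = \<tau> (x+1)" "\<sigma> (x+1) = \<tau> x" unfolding \<sigma>_def tr_def by auto
  have s1: "\<And>i. i \<noteq> x \<Longrightarrow> i \<noteq> x+1 \<Longrightarrow> \<sigma> i = \<tau> i" unfolding \<sigma>_def tr_def by auto
  have cj: "\<And>j. j \<in> {-X..X} - {x,x+1} \<Longrightarrow> cnt X b0 \<sigma> j = cnt X b0 \<tau> j"
  proof -
    fix j assume j: "j \<in> {-X..X} - {x,x+1}"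
    then consider "j < x" | "x + 1 < j" by force
    then show "cnt X b0 \<sigma> j = cnt X b0 \<tau> j"
    proof cases
      case 1 then show ?thesis unfolding \<sigma>_def by (intro cnt_left) auto
    next
      case 2 then show ?thesis unfolding \<sigma>_def using r by (intro cnt_right) auto
    qed
  qed
  have ends: "cnt X b0 \<sigma> x + cnt X b0 \<sigma> (x+1) = cnt X b0 \<tau> x + cnt X b0 \<tau> (x+1)"
  proof (cases "\<tau> x \<le> b0")
    case True
    have a1: "cnt X b0 \<tau> x = 0" unfolding cnt_def using True by simp
    have a2: "cnt X b0 \<sigma> (x+1) = 0" unfolding cnt_def using True s0 by simp
    have a3: "{i. -X \<le> i \<and> i < x + 1 \<and> b0 < \<tau> i \<and> b0 < \<tau> (x+1) \<and> \<tau> i < \<tau> (x+1)}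
       = {i. -X \<le> i \<and> i < x \<and> b0 < \<sigma> i \<and> b0 < \<sigma> x \<and> \<sigma> i < \<sigma> x}"
    proof (intro Collect_cong iffI)
      fix i assume h: "-X \<le> i \<and> i < x + 1 \<and> b0 < \<tau> i \<and> b0 < \<tau> (x+1) \<and> \<tau> i < \<tau> (x+1)"
      then have "i \<noteq> x" using True by auto
      then have "i < x" using h by auto
      then show "-X \<le> i \<and> i < x \<and> b0 < \<sigma> i \<and> b0 < \<sigma> x \<and> \<sigma> i < \<sigma> x"
        using h s0 s1[of i] by auto
    next
      fix i assume h: "-X \<le> i \<and> i < x \<and> b0 < \<sigma> i \<and> b0 < \<sigma> x \<and> \<sigma> i < \<sigma> x"
      then show "-X \<le> i \<and> i < x + 1 \<and> b0 < \<tau> i \<and> b0 < \<tau> (x+1) \<and> \<tau> i < \<tau> (x+1)"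
        using s0 s1[of i] by auto
    qed
    show ?thesis using a1 a2 a3 unfolding cnt_def by simp
  next
    case False
    then have T: "\<tau> (x+1) \<le> b0" using B by auto
    have a1: "cnt X b0 \<tau> (x+1) = 0" unfolding cnt_def using T by simp
    have a2: "cnt X b0 \<sigma> x = 0" unfolding cnt_def using T s0 by simp
    have a3: "{i. -X \<le> i \<and> i < x \<and> b0 < \<tau> i \<and> b0 < \<tau> x \<and> \<tau> i < \<tau> x}
       = {i. -X \<le> i \<and> i < x + 1 \<and> b0 < \<sigma> i \<and> b0 < \<sigma> (x+1) \<and> \<sigma> i < \<sigma> (x+1)}"
    proof (intro Collect_cong iffI)
      fix i assume h: "-X \<le> i \<and> i < x \<and> b0 < \<tau> i \<and> b0 < \<tau> x \<and> \<tau> i < \<tau> x"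
      then show "-X \<le> i \<and> i < x + 1 \<and> b0 < \<sigma> i \<and> b0 < \<sigma> (x+1) \<and> \<sigma> i < \<sigma> (x+1)"
        using s0 s1[of i] by auto
    next
      fix i assume h: "-X \<le> i \<and> i < x + 1 \<and> b0 < \<sigma> i \<and> b0 < \<sigma> (x+1) \<and> \<sigma> i < \<sigma> (x+1)"
      then have "i \<noteq> x" using T s0 by auto
      then have "i < x" using h by auto
      then show "-X \<le> i \<and> i < x \<and> b0 < \<tau> i \<and> b0 < \<tau> x \<and> \<tau> i < \<tau> x"
        using h s0 s1[of i] by auto
    qed
    show ?thesis using a1 a2 a3 unfolding cnt_def by simp
  qed
  have I: "finite {-X..X}" "x \<in> {-X..X}" "x+1 \<in> {-X..X}" "x \<noteq> x+1" using r by auto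
  have "nincB X b0 \<sigma> = cnt X b0 \<sigma> x + cnt X b0 \<sigma> (x+1) + (\<Sum>j\<in>{-X..X} - {x,x+1}. cnt X b0 \<sigma> j)"
    unfolding nincB_sum using sum_two_split[OF I, of "cnt X b0 \<sigma>"] by simp
  also have "\<dots> = cnt X b0 \<tau> x + cnt X b0 \<tau> (x+1) + (\<Sum>j\<in>{-X..X} - {x,x+1}. cnt X b0 \<tau> j)"
    using ends cj by simp
  also have "\<dots> = nincB X b0 \<tau>"
    unfolding nincB_sum using sum_two_split[OF I, of "cnt X b0 \<tau>"] by simp
  finally show ?thesis unfolding \<sigma>_def .
qed

lemma W_B:
  assumes r: "-X \<le> x" "x + 1 \<le> X" and B: "\<tau> x \<le> b0 \<or> \<tau> (x+1) \<le> b0"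
  shows "Wt q X b0 (swp x \<tau>) = Wt q X b0 \<tau>"
proof -
  have m: "swp x \<tau> \<in> perms (-X) X \<longleftrightarrow> \<tau> \<in> perms (-X) X"
    unfolding swp_tr by (rule perms_tr_iff) (use r in auto)
  show ?thesis unfolding Wt_def m unfolding swp_tr nincB_trB[OF r B] by simp
qed

lemma W_db:
  assumes r: "-X \<le> x" "x + 1 \<le> X" and nb: "b0 < \<tau> x" "b0 < \<tau> (x+1)"
  shows "Wt q X b0 (swp x \<tau>) * rate q (swp x \<tau>) x = Wt q X b0 \<tau> * rate q \<tau> x"
proof -
  have m: "swp x \<tau> \<in> perms (-X) X \<longleftrightarrow> \<tau> \<in> perms (-X) X"
    unfolding swp_tr by (rule perms_tr_iff) (use r in auto)
  show ?thesis
  proof (cases "\<tau> \<in> perms (-X) X")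
    case False then show ?thesis unfolding Wt_def m by simp
  next
    case perm: True
    have ne: "\<tau> x \<noteq> \<tau> (x+1)" using perms_inj[OF perm] r unfolding inj_on_def by force
    have sw: "swp x \<tau> x = \<tau> (x+1)" "swp x \<tau> (x+1) = \<tau> x" unfolding swp_def by auto
    show ?thesis
    proof (cases "\<tau> x < \<tau> (x+1)")
      case True
      have "nincB X b0 (\<tau> \<circ> tr x (x+1)) + 1 = nincB X b0 \<tau>"
        by (rule nincB_tr[OF perm]) (use r nb True in auto)
      then have "nincB X b0 (swp x \<tau>) + 1 = nincB X b0 \<tau>" unfolding swp_tr .
      then have nn: "nincB X b0 \<tau> = Suc (nincB X b0 (swp x \<tau>))" by simp
      have ra: "rate q (swp x \<tau>) x = q" "rate q \<tau> x = 1" unfolding rate_def sw using True by auto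
      show ?thesis unfolding Wt_def m ra using perm nn by simp
    next
      case False
      then have lt: "\<tau> (x+1) < \<tau> x" using ne by auto
      let ?s = "swp x \<tau>"
      have ps: "?s \<in> perms (-X) X" using m perm by simp
      have "nincB X b0 (?s \<circ> tr x (x+1)) + 1 = nincB X b0 ?s"
        by (rule nincB_tr[OF ps]) (use r nb lt sw in auto)
      moreover have "?s \<circ> tr x (x+1) = \<tau>" unfolding swp_tr by simp
      ultimately have "nincB X b0 \<tau> + 1 = nincB X b0 ?s" by simp
      then have nn: "nincB X b0 ?s = Suc (nincB X b0 \<tau>)" by simp
      have ra: "rate q (swp x \<tau>) x = 1" "rate q \<tau> x = q" unfolding rate_def sw using lt by auto
      show ?thesis unfolding Wt_def m ra using perm nn by simp
    qed
  qed
qed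

lemma gen_prod:
  assumes r: "-X \<le> lo" "hi \<le> X"
  shows "gen q lo hi (\<lambda>\<tau>. Wt q X b0 \<tau> * \<rho> (bet b0 \<tau>)) \<tau> = Wt q X b0 \<tau> * gen q lo hi \<rho> (bet b0 \<tau>)"
  unfolding gen_def sum_distrib_left
proof (rule sum.cong[OF refl])
  fix x assume x: "x \<in> {lo..<hi}"
  then have rx: "-X \<le> x" "x + 1 \<le> X" using r by auto
  show "Wt q X b0 (swp x \<tau>) * \<rho> (bet b0 (swp x \<tau>)) * rate q (swp x \<tau>) x - Wt q X b0 \<tau> * \<rho> (bet b0 \<tau>) * rate q \<tau> x =
    Wt q X b0 \<tau> * (\<rho> (swp x (bet b0 \<tau>)) * rate q (swp x (bet b0 \<tau>)) x - \<rho> (bet b0 \<tau>) * rate q (bet b0 \<tau>) x)"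
  proof (cases "b0 < \<tau> x \<and> b0 < \<tau> (x+1)")
    case True
    have "swp x (bet b0 \<tau>) = bet b0 \<tau>" unfolding swp_def bet_def fB_def using True by (auto simp: fun_eq_iff)
    moreover have "Wt q X b0 (swp x \<tau>) * rate q (swp x \<tau>) x = Wt q X b0 \<tau> * rate q \<tau> x"
      using W_db[OF rx] True by auto
    ultimately show ?thesis unfolding bet_swp by (simp add: algebra_simps)
  next
    case False
    then have B: "\<tau> x \<le> b0 \<or> \<tau> (x+1) \<le> b0" by auto
    have w: "Wt q X b0 (swp x \<tau>) = Wt q X b0 \<tau>" using W_B[OF rx B] .
    have r1: "rate q (swp x (bet b0 \<tau>)) x = rate q (swp x \<tau>) x"
      unfolding rate_def swp_def bet_def using fB_less[of "\<tau> (x+1)" b0 "\<tau> x"] B by auto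
    have r2: "rate q (bet b0 \<tau>) x = rate q \<tau> x"
      unfolding rate_def bet_def using fB_less[of "\<tau> x" b0 "\<tau> (x+1)"] B by auto
    show ?thesis unfolding bet_swp w r1 r2 by (simp add: algebra_simps)
  qed
qed

lemma genpow_prod:
  assumes r: "-X \<le> lo" "hi \<le> X"
  shows "(gen q lo hi ^^ n) (\<lambda>\<tau>. Wt q X b0 \<tau> * \<rho> (bet b0 \<tau>)) = (\<lambda>\<tau>. Wt q X b0 \<tau> * (gen q lo hi ^^ n) \<rho> (bet b0 \<tau>))"
proof (induction n)
  case 0 then show ?case by simp
next
  case (Suc n)
  show ?case unfolding funpow.simps comp_def Suc
    by (rule ext, rule gen_prod[OF r])
qed



lemma rate_bounds: "0 \<le> q \<Longrightarrow> q \<le> 1 \<Longrightarrow> 0 \<le> rate q w x \<and> rate q w x \<le> 1"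
  unfolding rate_def by auto

definition Kc :: "int \<Rightarrow> int \<Rightarrow> real" where "Kc lo hi = 2 * real (card {lo..<hi})"

lemma Kc_nonneg: "0 \<le> Kc lo hi" unfolding Kc_def by simp

lemma abs_mul_rate: "\<bar>u\<bar> \<le> M \<Longrightarrow> 0 \<le> r \<Longrightarrow> r \<le> (1::real) \<Longrightarrow> \<bar>u * r\<bar> \<le> M"
proof -
  assume a: "\<bar>u\<bar> \<le> M" "0 \<le> r" "r \<le> 1"
  have "\<bar>u * r\<bar> = \<bar>u\<bar> * r" using a by (simp add: abs_mult)
  also have "\<dots> \<le> \<bar>u\<bar>" using a by (intro mult_left_le) auto
  finally show ?thesis using a by linarith
qed

lemma gen_bound:
  assumes q: "0 \<le> q" "q \<le> 1" and M: "\<forall>\<tau>. \<bar>\<mu> \<tau>\<bar> \<le> M"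
  shows "\<bar>gen q lo hi \<mu> \<tau>\<bar> \<le> Kc lo hi * M"
proof -
  have "\<bar>gen q lo hi \<mu> \<tau>\<bar> \<le> (\<Sum>x\<in>{lo..<hi}. \<bar>\<mu> (swp x \<tau>) * rate q (swp x \<tau>) x - \<mu> \<tau> * rate q \<tau> x\<bar>)"
    unfolding gen_def by (rule sum_abs)
  also have "\<dots> \<le> (\<Sum>x\<in>{lo..<hi}. 2 * M)"
  proof (rule sum_mono)
    fix x
    have a: "\<bar>\<mu> (swp x \<tau>) * rate q (swp x \<tau>) x\<bar> \<le> M"
      using M rate_bounds[OF q] abs_mul_rate by blast
    have b: "\<bar>\<mu> \<tau> * rate q \<tau> x\<bar> \<le> M"
      using M rate_bounds[OF q] abs_mul_rate by blast
    show "\<bar>\<mu> (swp x \<tau>) * rate q (swp x \<tau>) x - \<mu> \<tau> * rate q \<tau> x\<bar> \<le> 2 * M"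
      using a b by linarith
  qed
  also have "\<dots> = Kc lo hi * M" unfolding Kc_def by simp
  finally show ?thesis .
qed

lemma genpow_bound:
  assumes q: "0 \<le> q" "q \<le> 1" and M: "\<forall>\<tau>. \<bar>\<mu> \<tau>\<bar> \<le> M"
  shows "\<forall>\<tau>. \<bar>(gen q lo hi ^^ n) \<mu> \<tau>\<bar> \<le> Kc lo hi ^ n * M"
proof (induction n)
  case 0 then show ?case using M by simp
next
  case (Suc n)
  show ?case using gen_bound[OF q Suc] by (simp add: mult.assoc)
qed

lemma exp_like_summable: "summable (\<lambda>n. (x::real) ^ n / fact n * M)"
proof -
  have "summable (\<lambda>n. inverse (fact n) * x ^ n)" by (rule summable_exp)
  then have "summable (\<lambda>n. inverse (fact n) * x ^ n * M)" by (rule summable_mult2)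
  then show ?thesis by (simp add: divide_inverse mult.commute)
qed

lemma evolve_abs_summable:
  assumes q: "0 \<le> q" "q \<le> 1" and M: "\<forall>\<tau>. \<bar>\<mu> \<tau>\<bar> \<le> M"
  shows "summable (\<lambda>n. \<bar>s ^ n / fact n * (gen q lo hi ^^ n) \<mu> \<tau>\<bar>)"
proof (rule summable_comparison_test')
  show "summable (\<lambda>n. (\<bar>s\<bar> * Kc lo hi) ^ n / fact n * M)" by (rule exp_like_summable)
  fix n
  have "\<bar>(gen q lo hi ^^ n) \<mu> \<tau>\<bar> \<le> Kc lo hi ^ n * M" using genpow_bound[OF q M] by blast
  then have "\<bar>s\<bar> ^ n / fact n * \<bar>(gen q lo hi ^^ n) \<mu> \<tau>\<bar> \<le> \<bar>s\<bar> ^ n / fact n * (Kc lo hi ^ n * M)"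
    by (intro mult_left_mono) auto
  then show "norm \<bar>s ^ n / fact n * (gen q lo hi ^^ n) \<mu> \<tau>\<bar> \<le> (\<bar>s\<bar> * Kc lo hi) ^ n / fact n * M"
    by (simp add: abs_mult power_abs power_mult_distrib)
qed

lemma evolve_summable:
  assumes q: "0 \<le> q" "q \<le> 1" and M: "\<forall>\<tau>. \<bar>\<mu> \<tau>\<bar> \<le> M"
  shows "summable (\<lambda>n. s ^ n / fact n * (gen q lo hi ^^ n) \<mu> \<tau>)"
  by (rule summable_rabs_cancel[OF evolve_abs_summable[OF q M]])

lemma gen_sum:
  "gen q lo hi (\<lambda>\<tau>. \<Sum>j\<in>J. c j * f j \<tau>) \<tau> = (\<Sum>j\<in>J. c j * gen q lo hi (f j) \<tau>)"
proof -
  have "gen q lo hi (\<lambda>\<tau>. \<Sum>j\<in>J. c j * f j \<tau>) \<tau> =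
     (\<Sum>x\<in>{lo..<hi}. \<Sum>j\<in>J. c j * (f j (swp x \<tau>) * rate q (swp x \<tau>) x - f j \<tau> * rate q \<tau> x))"
    unfolding gen_def
  proof (rule sum.cong[OF refl])
    fix x
    have "(\<Sum>j\<in>J. c j * f j (swp x \<tau>)) * rate q (swp x \<tau>) x = (\<Sum>j\<in>J. c j * (f j (swp x \<tau>) * rate q (swp x \<tau>) x))"
      by (simp add: sum_distrib_right mult.assoc)
    moreover have "(\<Sum>j\<in>J. c j * f j \<tau>) * rate q \<tau> x = (\<Sum>j\<in>J. c j * (f j \<tau> * rate q \<tau> x))"
      by (simp add: sum_distrib_right mult.assoc)
    ultimately show "(\<Sum>j\<in>J. c j * f j (swp x \<tau>)) * rate q (swp x \<tau>) x - (\<Sum>j\<in>J. c j * f j \<tau>) * rate q \<tau> x =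
      (\<Sum>j\<in>J. c j * (f j (swp x \<tau>) * rate q (swp x \<tau>) x - f j \<tau> * rate q \<tau> x))"
      by (simp add: right_diff_distrib sum_subtractf)
  qed
  also have "\<dots> = (\<Sum>j\<in>J. \<Sum>x\<in>{lo..<hi}. c j * (f j (swp x \<tau>) * rate q (swp x \<tau>) x - f j \<tau> * rate q \<tau> x))"
    by (rule sum.swap)
  also have "\<dots> = (\<Sum>j\<in>J. c j * gen q lo hi (f j) \<tau>)"
    unfolding gen_def by (simp add: sum_distrib_left)
  finally show ?thesis .
qed

definition Pop :: "real \<Rightarrow> int \<Rightarrow> int \<Rightarrow> real \<Rightarrow> ((int \<Rightarrow> int) \<Rightarrow> real) \<Rightarrow> ((int \<Rightarrow> int) \<Rightarrow> real)" where
  "Pop q lo hi L \<mu> = (\<lambda>\<tau>. \<mu> \<tau> + gen q lo hi \<mu> \<tau> / L)"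

lemma gen_Pop: "L \<noteq> 0 \<Longrightarrow> gen q lo hi \<nu> \<tau> = L * Pop q lo hi L \<nu> \<tau> - L * \<nu> \<tau>"
  unfolding Pop_def by (simp add: field_simps)

lemma Pop_nonneg:
  assumes q: "0 \<le> q" "q \<le> 1" and L: "real (card {lo..<hi}) \<le> L" "0 < L" and nn: "\<forall>\<tau>. 0 \<le> \<nu> \<tau>"
  shows "0 \<le> Pop q lo hi L \<nu> \<tau>"
proof -
  have "gen q lo hi \<nu> \<tau> \<ge> (\<Sum>x\<in>{lo..<hi}. - \<nu> \<tau>)"
    unfolding gen_def
  proof (rule sum_mono)
    fix x
    have "0 \<le> \<nu> (swp x \<tau>) * rate q (swp x \<tau>) x" using nn rate_bounds[OF q] by simp
    moreover have "\<nu> \<tau> * rate q \<tau> x \<le> \<nu> \<tau>" using nn rate_bounds[OF q] by (intro mult_left_le) auto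
    ultimately show "- \<nu> \<tau> \<le> \<nu> (swp x \<tau>) * rate q (swp x \<tau>) x - \<nu> \<tau> * rate q \<tau> x" by linarith
  qed
  then have g: "gen q lo hi \<nu> \<tau> \<ge> - (real (card {lo..<hi}) * \<nu> \<tau>)" by simp
  have "real (card {lo..<hi}) * \<nu> \<tau> \<le> L * \<nu> \<tau>" using L nn by (intro mult_right_mono) auto
  then have "gen q lo hi \<nu> \<tau> / L \<ge> - \<nu> \<tau>" using g L by (simp add: field_simps)
  then show ?thesis unfolding Pop_def by linarith
qed

lemma Pop_bound:
  assumes q: "0 \<le> q" "q \<le> 1" and L: "0 < L" and M: "\<forall>\<tau>. \<bar>\<nu> \<tau>\<bar> \<le> M"
  shows "\<bar>Pop q lo hi L \<nu> \<tau>\<bar> \<le> (1 + Kc lo hi / L) * M"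
proof -
  have g: "\<bar>gen q lo hi \<nu> \<tau>\<bar> \<le> Kc lo hi * M" by (rule gen_bound[OF q M])
  have "\<bar>gen q lo hi \<nu> \<tau> / L\<bar> = \<bar>gen q lo hi \<nu> \<tau>\<bar> / L" using L by simp
  also have "\<dots> \<le> Kc lo hi * M / L" using g L by (rule divide_right_mono[OF _ less_imp_le])
  finally have a: "\<bar>gen q lo hi \<nu> \<tau> / L\<bar> \<le> Kc lo hi * M / L" .
  have b: "\<bar>\<nu> \<tau> + gen q lo hi \<nu> \<tau> / L\<bar> \<le> \<bar>\<nu> \<tau>\<bar> + \<bar>gen q lo hi \<nu> \<tau> / L\<bar>" by (rule abs_triangle_ineq)
  have c: "(1 + Kc lo hi / L) * M = M + Kc lo hi * M / L" by (simp add: distrib_right)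
  have d: "\<bar>\<nu> \<tau>\<bar> \<le> M" using M by blast
  show ?thesis unfolding Pop_def c using a b d by linarith
qed

lemma Poppow_bound:
  assumes q: "0 \<le> q" "q \<le> 1" and L: "0 < L" and M: "\<forall>\<tau>. \<bar>\<nu> \<tau>\<bar> \<le> M"
  shows "\<forall>\<tau>. \<bar>(Pop q lo hi L ^^ n) \<nu> \<tau>\<bar> \<le> (1 + Kc lo hi / L) ^ n * M"
proof (induction n)
  case 0 then show ?case using M by simp
next
  case (Suc n)
  show ?case using Pop_bound[OF q L Suc] by (simp add: mult.assoc)
qed

lemma Poppow_nonneg:
  assumes q: "0 \<le> q" "q \<le> 1" and L: "real (card {lo..<hi}) \<le> L" "0 < L" and nn: "\<forall>\<tau>. 0 \<le> \<nu> \<tau>"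
  shows "\<forall>\<tau>. 0 \<le> (Pop q lo hi L ^^ n) \<nu> \<tau>"
proof (induction n)
  case 0 then show ?case using nn by simp
next
  case (Suc n)
  show ?case using Pop_nonneg[OF q L Suc] by simp
qed

lemma binom_seq:
  fixes A :: "nat \<Rightarrow> real"
  shows "(\<Sum>k\<le>n. real (n choose k) * A (Suc k) * b ^ (n - k)) + (\<Sum>k\<le>n. real (n choose k) * A k * b ^ (Suc n - k))
       = (\<Sum>k\<le>Suc n. real (Suc n choose k) * A k * b ^ (Suc n - k))"
proof -
  let ?g = "\<lambda>k. real (n choose k) * A k * b ^ (Suc n - k)"
  have "(\<Sum>k\<le>n. ?g k) = (\<Sum>k\<le>Suc n. ?g k)" by simp
  also have "\<dots> = ?g 0 + (\<Sum>k\<le>n. ?g (Suc k))" by (rule sum.atMost_Suc_shift)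
  finally have 1: "(\<Sum>k\<le>n. ?g k) = ?g 0 + (\<Sum>k\<le>n. real (n choose Suc k) * A (Suc k) * b ^ (n - k))" by simp
  let ?h = "\<lambda>k. real (Suc n choose k) * A k * b ^ (Suc n - k)"
  have "(\<Sum>k\<le>Suc n. ?h k) = ?h 0 + (\<Sum>k\<le>n. ?h (Suc k))" by (rule sum.atMost_Suc_shift)
  also have "(\<Sum>k\<le>n. ?h (Suc k)) = (\<Sum>k\<le>n. real (n choose k) * A (Suc k) * b ^ (n - k)) + (\<Sum>k\<le>n. real (n choose Suc k) * A (Suc k) * b ^ (n - k))"
    by (simp add: sum.distrib[symmetric] algebra_simps)
  finally show ?thesis using 1 by simp
qed

lemma genpow_binom:
  assumes L: "L \<noteq> 0"
  shows "(gen q lo hi ^^ n) \<mu> = (\<lambda>\<tau>. \<Sum>k\<le>n. real (n choose k) * (L ^ k * (Pop q lo hi L ^^ k) \<mu> \<tau>) * (- L) ^ (n - k))"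
proof (induction n)
  case 0 then show ?case by simp
next
  case (Suc n)
  show ?case
  proof (rule ext)
    fix \<tau>
    let ?P = "\<lambda>k. (Pop q lo hi L ^^ k) \<mu>"
    let ?A = "\<lambda>k. L ^ k * ?P k \<tau>"
    have "(gen q lo hi ^^ Suc n) \<mu> \<tau> = gen q lo hi (\<lambda>\<tau>. \<Sum>k\<le>n. (real (n choose k) * L ^ k * (- L) ^ (n - k)) * ?P k \<tau>) \<tau>"
      using Suc by (simp add: algebra_simps)
    also have "\<dots> = (\<Sum>k\<le>n. (real (n choose k) * L ^ k * (- L) ^ (n - k)) * gen q lo hi (?P k) \<tau>)"
      by (rule gen_sum)
    also have "\<dots> = (\<Sum>k\<le>n. (real (n choose k) * L ^ k * (- L) ^ (n - k)) * (L * ?P (Suc k) \<tau> - L * ?P k \<tau>))"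
      using gen_Pop[OF L] by simp
    also have "\<dots> = (\<Sum>k\<le>n. real (n choose k) * ?A (Suc k) * (-L) ^ (n - k)) + (\<Sum>k\<le>n. real (n choose k) * ?A k * (-L) ^ (Suc n - k))"
    proof -
      have "\<And>k. k \<le> n \<Longrightarrow> (real (n choose k) * L ^ k * (- L) ^ (n - k)) * (L * ?P (Suc k) \<tau> - L * ?P k \<tau>)
         = real (n choose k) * ?A (Suc k) * (-L) ^ (n - k) + real (n choose k) * ?A k * (-L) ^ (Suc n - k)"
        by (simp add: Suc_diff_le algebra_simps)
      then show ?thesis by (simp add: sum.distrib[symmetric])
    qed
    also have "\<dots> = (\<Sum>k\<le>Suc n. real (Suc n choose k) * ?A k * (- L) ^ (Suc n - k))"
      by (rule binom_seq)
    finally show "(gen q lo hi ^^ Suc n) \<mu> \<tau> = (\<Sum>k\<le>Suc n. real (Suc n choose k) * (L ^ k * (Pop q lo hi L ^^ k) \<mu> \<tau>) * (- L) ^ (Suc n - k))" .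
  qed
qed



lemma sum_rev_atMost: "(\<Sum>i\<le>n. f i) = (\<Sum>k\<le>n. f (n - k))" for f :: "nat \<Rightarrow> real"
  by (rule sum.reindex_bij_witness[where i="\<lambda>k. n - k" and j="\<lambda>i. n - i"]) auto

lemma evolve_pos:
  assumes q: "0 \<le> q" "q \<le> 1" and nn: "\<forall>\<tau>. 0 \<le> \<mu> \<tau>" and M: "\<forall>\<tau>. \<bar>\<mu> \<tau>\<bar> \<le> M" and s: "0 \<le> s"
  shows "0 \<le> evolve q lo hi \<mu> s \<tau>"
proof -
  define L where "L = real (card {lo..<hi}) + 1"
  have L: "0 < L" "real (card {lo..<hi}) \<le> L" "L \<noteq> 0" unfolding L_def by auto
  define a where "a = (\<lambda>i. (- L * s) ^ i / fact i)"
  define b where "b = (\<lambda>j. (L * s) ^ j / fact j * (Pop q lo hi L ^^ j) \<mu> \<tau>)"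
  have sa: "summable (\<lambda>i. norm (a i))"
  proof -
    have "summable (\<lambda>i. (L * s) ^ i / fact i * 1)" by (rule exp_like_summable)
    moreover have "\<And>i. norm (a i) = (L * s) ^ i / fact i * 1"
      unfolding a_def using L s by (simp add: power_abs abs_mult)
    ultimately show ?thesis by simp
  qed
  have Pb: "\<forall>\<tau>. \<bar>(Pop q lo hi L ^^ j) \<mu> \<tau>\<bar> \<le> (1 + Kc lo hi / L) ^ j * M" for j
    by (rule Poppow_bound[OF q L(1) M])
  have Pn: "\<forall>\<tau>. 0 \<le> (Pop q lo hi L ^^ j) \<mu> \<tau>" for j
    by (rule Poppow_nonneg[OF q L(2) L(1) nn])
  have sb: "summable (\<lambda>j. norm (b j))"
  proof (rule summable_comparison_test')
    show "summable (\<lambda>j. (L * s * (1 + Kc lo hi / L)) ^ j / fact j * M)" by (rule exp_like_summable)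
    fix j
    have "norm (norm (b j)) = (L * s) ^ j / fact j * \<bar>(Pop q lo hi L ^^ j) \<mu> \<tau>\<bar>"
      unfolding b_def using L s by (simp add: abs_mult)
    also have "\<dots> \<le> (L * s) ^ j / fact j * ((1 + Kc lo hi / L) ^ j * M)"
      using Pb[of j] L s by (intro mult_left_mono) auto
    also have "\<dots> = (L * s * (1 + Kc lo hi / L)) ^ j / fact j * M" by (simp add: power_mult_distrib)
    finally show "norm (norm (b j)) \<le> (L * s * (1 + Kc lo hi / L)) ^ j / fact j * M" .
  qed
  have cp: "(\<Sum>k. a k) * (\<Sum>k. b k) = (\<Sum>k. \<Sum>i\<le>k. a i * b (k - i))"
    by (rule Cauchy_product[OF sa sb])
  have trm: "(\<Sum>i\<le>n. a i * b (n - i)) = s ^ n / fact n * (gen q lo hi ^^ n) \<mu> \<tau>" for n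
  proof -
    have "(\<Sum>i\<le>n. a i * b (n - i)) = (\<Sum>k\<le>n. a (n - k) * b (n - (n - k)))" by (rule sum_rev_atMost)
    also have "\<dots> = (\<Sum>k\<le>n. s ^ n / fact n * (real (n choose k) * (L ^ k * (Pop q lo hi L ^^ k) \<mu> \<tau>) * (- L) ^ (n - k)))"
    proof (rule sum.cong[OF refl])
      fix k assume k: "k \<in> {..n}"
      then have kn: "k \<le> n" by simp
      have nk: "n - (n - k) = k" using kn by simp
      have ch: "real (n choose k) = fact n / (fact k * fact (n - k))" by (rule binomial_fact[OF kn])
      have pw: "s ^ n = s ^ k * s ^ (n - k)" using kn by (simp add: power_add[symmetric])
      have neg: "(- L * s) ^ (n - k) = (- L) ^ (n - k) * s ^ (n - k)" by (rule power_mult_distrib)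
      have pos: "(L * s) ^ k = L ^ k * s ^ k" by (rule power_mult_distrib)
      show "a (n - k) * b (n - (n - k)) = s ^ n / fact n * (real (n choose k) * (L ^ k * (Pop q lo hi L ^^ k) \<mu> \<tau>) * (- L) ^ (n - k))"
        unfolding a_def b_def nk ch pw neg pos by (simp add: field_simps)
    qed
    also have "\<dots> = s ^ n / fact n * (\<Sum>k\<le>n. real (n choose k) * (L ^ k * (Pop q lo hi L ^^ k) \<mu> \<tau>) * (- L) ^ (n - k))"
      by (simp add: sum_distrib_left)
    also have "\<dots> = s ^ n / fact n * (gen q lo hi ^^ n) \<mu> \<tau>"
      unfolding genpow_binom[OF L(3)] by simp
    finally show ?thesis .
  qed
  have ev: "evolve q lo hi \<mu> s \<tau> = (\<Sum>k. a k) * (\<Sum>k. b k)"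
    unfolding evolve_def cp trm by simp
  have "(\<lambda>n. (- L * s) ^ n /\<^sub>R fact n) sums exp (- L * s)" by (rule exp_converges)
  then have "(\<Sum>k. a k) = exp (- L * s)" unfolding a_def by (simp add: sums_iff divide_inverse mult.commute)
  then have A: "0 \<le> (\<Sum>k. a k)" by simp
  have "summable b" using sb by (rule summable_norm_cancel)
  moreover have "\<And>j. 0 \<le> b j" unfolding b_def using Pn L s by simp
  ultimately have B: "0 \<le> (\<Sum>k. b k)" by (rule suminf_nonneg)
  show ?thesis unfolding ev using A B by simp
qed

lemma swp_swp[simp]: "swp x (swp x \<tau>) = \<tau>"
  unfolding swp_def by (auto simp: fun_eq_iff)

lemma swp_perms: assumes "-X \<le> x" "x + 1 \<le> X" "\<tau> \<in> perms (-X) X" shows "swp x \<tau> \<in> perms (-X) X"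
  unfolding swp_tr by (rule perms_tr) (use assms in auto)

lemma swp_bij: assumes "-X \<le> x" "x + 1 \<le> X" shows "bij_betw (swp x) (perms (-X) X) (perms (-X) X)"
  by (rule bij_betw_byWitness[where f'="swp x"]) (use swp_perms[OF assms] in auto)

lemma gen_sum_zero:
  assumes r: "-X \<le> lo" "hi \<le> X"
  shows "(\<Sum>\<tau>\<in>perms (-X) X. gen q lo hi \<mu> \<tau>) = 0"
proof -
  have "(\<Sum>\<tau>\<in>perms (-X) X. gen q lo hi \<mu> \<tau>) =
     (\<Sum>x\<in>{lo..<hi}. (\<Sum>\<tau>\<in>perms (-X) X. \<mu> (swp x \<tau>) * rate q (swp x \<tau>) x) - (\<Sum>\<tau>\<in>perms (-X) X. \<mu> \<tau> * rate q \<tau> x))"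
    unfolding gen_def by (subst sum.swap) (simp add: sum_subtractf)
  also have "\<dots> = 0"
  proof (rule sum.neutral, rule ballI)
    fix x assume "x \<in> {lo..<hi}"
    then have "-X \<le> x" "x + 1 \<le> X" using r by auto
    then have "(\<Sum>\<tau>\<in>perms (-X) X. \<mu> (swp x \<tau>) * rate q (swp x \<tau>) x) = (\<Sum>\<tau>\<in>perms (-X) X. \<mu> \<tau> * rate q \<tau> x)"
      using sum.reindex_bij_betw[OF swp_bij, of X x "\<lambda>\<tau>. \<mu> \<tau> * rate q \<tau> x"] by simp
    then show "(\<Sum>\<tau>\<in>perms (-X) X. \<mu> (swp x \<tau>) * rate q (swp x \<tau>) x) - (\<Sum>\<tau>\<in>perms (-X) X. \<mu> \<tau> * rate q \<tau> x) = 0"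
      by simp
  qed
  finally show ?thesis .
qed

lemma finite_perms: "finite (perms m n)"
proof -
  let ?I = "{m..n}"
  let ?e = "\<lambda>f. \<lambda>x. if x \<in> ?I then f x else x"
  have "perms m n \<subseteq> ?e ` (PiE ?I (\<lambda>_. ?I))"
  proof
    fix \<tau> assume t: "\<tau> \<in> perms m n"
    then have "restrict \<tau> ?I \<in> PiE ?I (\<lambda>_. ?I)"
      unfolding perms_def using bij_betw_apply by fastforce
    moreover have "\<tau> = ?e (restrict \<tau> ?I)" using t unfolding perms_def by (auto simp: fun_eq_iff)
    ultimately show "\<tau> \<in> ?e ` (PiE ?I (\<lambda>_. ?I))" by blast
  qed
  moreover have "finite (PiE ?I (\<lambda>_. ?I))" by (rule finite_PiE) auto
  ultimately show ?thesis using finite_subset by blast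
qed

lemma evolve_sum:
  assumes q: "0 \<le> q" "q \<le> 1" and r: "-X \<le> lo" "hi \<le> X" and M: "\<forall>\<tau>. \<bar>\<mu> \<tau>\<bar> \<le> M"
  shows "(\<Sum>\<tau>\<in>perms (-X) X. evolve q lo hi \<mu> s \<tau>) = (\<Sum>\<tau>\<in>perms (-X) X. \<mu> \<tau>)"
proof -
  let ?f = "\<lambda>\<tau> n. s ^ n / fact n * (gen q lo hi ^^ n) \<mu> \<tau>"
  have "(\<Sum>\<tau>\<in>perms (-X) X. evolve q lo hi \<mu> s \<tau>) = (\<Sum>n. \<Sum>\<tau>\<in>perms (-X) X. ?f \<tau> n)"
    unfolding evolve_def by (rule suminf_sum[symmetric]) (rule evolve_summable[OF q M])
  also have "\<dots> = (\<Sum>n\<in>{0}. \<Sum>\<tau>\<in>perms (-X) X. ?f \<tau> n)"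
  proof (rule suminf_finite)
    fix n :: nat assume "n \<notin> {0}"
    then obtain m where n: "n = Suc m" by (cases n) auto
    have "(\<Sum>\<tau>\<in>perms (-X) X. ?f \<tau> n) = s ^ n / fact n * (\<Sum>\<tau>\<in>perms (-X) X. gen q lo hi ((gen q lo hi ^^ m) \<mu>) \<tau>)"
      unfolding n by (simp add: sum_distrib_left)
    also have "\<dots> = 0" using gen_sum_zero[OF r] by simp
    finally show "(\<Sum>\<tau>\<in>perms (-X) X. ?f \<tau> n) = 0" .
  qed simp
  also have "\<dots> = (\<Sum>\<tau>\<in>perms (-X) X. \<mu> \<tau>)" by simp
  finally show ?thesis .
qed

lemma evolve_prod:
  assumes q: "0 \<le> q" "q \<le> 1" and r: "-X \<le> lo" "hi \<le> X" and M: "\<forall>b. \<bar>\<rho> b\<bar> \<le> M"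
  shows "evolve q lo hi (\<lambda>\<tau>. Wt q X b0 \<tau> * \<rho> (bet b0 \<tau>)) s \<tau> = Wt q X b0 \<tau> * evolve q lo hi \<rho> s (bet b0 \<tau>)"
proof -
  have "evolve q lo hi (\<lambda>\<tau>. Wt q X b0 \<tau> * \<rho> (bet b0 \<tau>)) s \<tau>
      = (\<Sum>n. Wt q X b0 \<tau> * (s ^ n / fact n * (gen q lo hi ^^ n) \<rho> (bet b0 \<tau>)))"
    unfolding evolve_def genpow_prod[OF r] by (simp add: algebra_simps)
  also have "\<dots> = Wt q X b0 \<tau> * evolve q lo hi \<rho> s (bet b0 \<tau>)"
    unfolding evolve_def by (rule suminf_mult[OF evolve_summable[OF q M]])
  finally show ?thesis .
qed

lemma Wt_bounds: "0 \<le> q \<Longrightarrow> q \<le> 1 \<Longrightarrow> 0 \<le> Wt q X b0 \<tau> \<and> Wt q X b0 \<tau> \<le> 1"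
  unfolding Wt_def by (auto simp: power_le_one)



definition Sset :: "int \<Rightarrow> int \<Rightarrow> int \<Rightarrow> (int \<Rightarrow> int) \<Rightarrow> int set" where
  "Sset X b0 p \<tau> = {i. -X \<le> i \<and> i < p \<and> b0 < \<tau> i \<and> \<tau> i < \<tau> p}"
definition cp :: "int \<Rightarrow> int \<Rightarrow> int \<Rightarrow> (int \<Rightarrow> int) \<Rightarrow> nat" where
  "cp X b0 p \<tau> = card (Sset X b0 p \<tau>)"
definition i0f :: "int \<Rightarrow> int \<Rightarrow> int \<Rightarrow> (int \<Rightarrow> int) \<Rightarrow> int" where
  "i0f X b0 p \<tau> = (SOME i. i \<in> Sset X b0 p \<tau> \<and> (\<forall>i'\<in>Sset X b0 p \<tau>. \<tau> i' \<le> \<tau> i))"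
definition phi :: "int \<Rightarrow> int \<Rightarrow> int \<Rightarrow> (int \<Rightarrow> int) \<Rightarrow> (int \<Rightarrow> int)" where
  "phi X b0 p \<tau> = \<tau> \<circ> tr (i0f X b0 p \<tau>) p"

lemma finite_Sset: "finite (Sset X b0 p \<tau>)"
  unfolding Sset_def by (rule finite_subset[of _ "{-X..<p}"]) auto

lemma ex_max:
  assumes "finite S" "S \<noteq> {}"
  shows "\<exists>i\<in>S. \<forall>i'\<in>S. (\<tau>::int\<Rightarrow>int) i' \<le> \<tau> i"
proof -
  have f: "finite (\<tau> ` S)" "\<tau> ` S \<noteq> {}" using assms by auto
  have "Max (\<tau> ` S) \<in> \<tau> ` S" by (rule Max_in[OF f])
  then obtain i where i: "i \<in> S" "\<tau> i = Max (\<tau> ` S)" by auto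
  have "\<forall>i'\<in>S. \<tau> i' \<le> \<tau> i" unfolding i(2) using f(1) by (auto intro: Max_ge)
  then show ?thesis using i(1) by blast
qed

lemma i0f_props:
  assumes "cp X b0 p \<tau> \<ge> 1"
  shows "i0f X b0 p \<tau> \<in> Sset X b0 p \<tau> \<and> (\<forall>i'\<in>Sset X b0 p \<tau>. \<tau> i' \<le> \<tau> (i0f X b0 p \<tau>))"
proof -
  have "Sset X b0 p \<tau> \<noteq> {}" using assms unfolding cp_def by (metis card.empty not_one_le_zero)
  then have "\<exists>i. i \<in> Sset X b0 p \<tau> \<and> (\<forall>i'\<in>Sset X b0 p \<tau>. \<tau> i' \<le> \<tau> i)"
    using ex_max[OF finite_Sset] by blast
  then show ?thesis unfolding i0f_def by (rule someI_ex)
qed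

context
  fixes X b0 p :: int and \<tau> :: "int \<Rightarrow> int"
  assumes perm: "\<tau> \<in> perms (-X) X" and pI: "-X \<le> p" "p \<le> X" and c1: "cp X b0 p \<tau> \<ge> 1"
begin

definition "ii = i0f X b0 p \<tau>"

lemma ii_props: "-X \<le> ii" "ii < p" "b0 < \<tau> ii" "\<tau> ii < \<tau> p"
  "\<And>i. -X \<le> i \<Longrightarrow> i < p \<Longrightarrow> b0 < \<tau> i \<Longrightarrow> \<tau> i < \<tau> p \<Longrightarrow> \<tau> i \<le> \<tau> ii"
  using i0f_props[OF c1] unfolding ii_def Sset_def by auto

lemma phi_eq: "phi X b0 p \<tau> = \<tau> \<circ> tr ii p" unfolding phi_def ii_def ..

lemma phi_perm: "phi X b0 p \<tau> \<in> perms (-X) X"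
  unfolding phi_eq by (rule perms_tr[OF perm]) (use ii_props pI in auto)

lemma phi_ninc: "nincB X b0 (phi X b0 p \<tau>) + 1 = nincB X b0 \<tau>"
  unfolding phi_eq
proof (rule nincB_tr[OF perm])
  show "-X \<le> ii" "ii < p" "p \<le> X" "b0 < \<tau> ii" "\<tau> ii < \<tau> p" using ii_props pI by auto
  show "\<forall>i. ii < i \<and> i < p \<and> b0 < \<tau> i \<longrightarrow> \<not> (\<tau> ii < \<tau> i \<and> \<tau> i < \<tau> p)"
  proof (intro allI impI notI)
    fix i assume a: "ii < i \<and> i < p \<and> b0 < \<tau> i" and b: "\<tau> ii < \<tau> i \<and> \<tau> i < \<tau> p"
    then have "\<tau> i \<le> \<tau> ii" using ii_props(5)[of i] ii_props(1) by auto
    then show False using b by simp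
  qed
qed

lemma phi_vals: "phi X b0 p \<tau> ii = \<tau> p" "phi X b0 p \<tau> p = \<tau> ii"
  "\<And>i. i \<noteq> ii \<Longrightarrow> i \<noteq> p \<Longrightarrow> phi X b0 p \<tau> i = \<tau> i"
  unfolding phi_eq tr_def using ii_props by auto

lemma phi_nb: "(b0 < phi X b0 p \<tau> i) = (b0 < \<tau> i)"
  using phi_vals(3)[of i] phi_vals(1,2) ii_props by (cases "i = ii"; cases "i = p") auto

lemma phi_bet: "bet b0 (phi X b0 p \<tau>) = bet b0 \<tau>"
proof (rule ext)
  fix i show "bet b0 (phi X b0 p \<tau>) i = bet b0 \<tau> i"
    unfolding bet_def fB_def using phi_vals(3)[of i] phi_vals(1,2) ii_props by (cases "i = ii"; cases "i = p") auto
qed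

lemma phi_cp: "cp X b0 p (phi X b0 p \<tau>) + 1 = cp X b0 p \<tau>"
proof -
  let ?s = "phi X b0 p \<tau>"
  have inj: "inj_on \<tau> {-X..X}" by (rule perms_inj[OF perm])
  have eq: "Sset X b0 p \<tau> = insert ii (Sset X b0 p ?s)"
  proof (rule set_eqI, rule iffI)
    fix i assume i: "i \<in> Sset X b0 p \<tau>"
    show "i \<in> insert ii (Sset X b0 p ?s)"
    proof (cases "i = ii")
      case False
      then have ip: "i \<noteq> p" using i unfolding Sset_def by auto
      have h: "-X \<le> i" "i < p" "b0 < \<tau> i" "\<tau> i < \<tau> p" using i unfolding Sset_def by auto
      have le: "\<tau> i \<le> \<tau> ii" using ii_props(5)[OF h] .
      have "\<tau> i \<noteq> \<tau> ii" using inj_onD[OF inj, of i ii] False h ii_props pI by auto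
      then have "\<tau> i < \<tau> ii" using le by simp
      then show ?thesis unfolding Sset_def using h phi_vals(2) phi_vals(3)[OF False ip] by simp
    qed simp
  next
    fix i assume i: "i \<in> insert ii (Sset X b0 p ?s)"
    show "i \<in> Sset X b0 p \<tau>"
    proof (cases "i = ii")
      case True then show ?thesis unfolding Sset_def using ii_props by simp
    next
      case False
      then have i': "i \<in> Sset X b0 p ?s" using i by simp
      then have ip: "i \<noteq> p" unfolding Sset_def by auto
      then show ?thesis using i' phi_vals(2) phi_vals(3)[OF False ip] ii_props unfolding Sset_def by auto
    qed
  qed
  have "ii \<notin> Sset X b0 p ?s" unfolding Sset_def using phi_vals ii_props by auto
  then show ?thesis unfolding cp_def eq using finite_Sset by simp
qed

end

lemma phi_inj:
  assumes pI: "-X \<le> p" "p \<le> X"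
  shows "inj_on (phi X b0 p) {\<tau> \<in> perms (-X) X. cp X b0 p \<tau> \<ge> 1}"
proof (rule inj_onI)
  fix \<tau>1 \<tau>2 assume t1: "\<tau>1 \<in> {\<tau> \<in> perms (-X) X. cp X b0 p \<tau> \<ge> 1}" and t2: "\<tau>2 \<in> {\<tau> \<in> perms (-X) X. cp X b0 p \<tau> \<ge> 1}"
    and eq: "phi X b0 p \<tau>1 = phi X b0 p \<tau>2"
  have p1: "\<tau>1 \<in> perms (-X) X" "cp X b0 p \<tau>1 \<ge> 1" using t1 by auto
  have p2: "\<tau>2 \<in> perms (-X) X" "cp X b0 p \<tau>2 \<ge> 1" using t2 by auto
  define \<sigma> where "\<sigma> = phi X b0 p \<tau>1"
  define j1 where "j1 = ii X b0 p \<tau>1"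
  define j2 where "j2 = ii X b0 p \<tau>2"
  have s1: "\<sigma> = \<tau>1 \<circ> tr j1 p" unfolding \<sigma>_def j1_def by (rule phi_eq[OF p1(1) pI p1(2)])
  have s2: "\<sigma> = \<tau>2 \<circ> tr j2 p" unfolding \<sigma>_def eq j2_def by (rule phi_eq[OF p2(1) pI p2(2)])
  have sp: "\<sigma> \<in> perms (-X) X" unfolding \<sigma>_def by (rule phi_perm[OF p1(1) pI p1(2)])
  have key: "\<And>\<tau> j. \<tau> \<in> perms (-X) X \<Longrightarrow> cp X b0 p \<tau> \<ge> 1 \<Longrightarrow> j = ii X b0 p \<tau> \<Longrightarrow> \<sigma> = \<tau> \<circ> tr j p \<Longrightarrow>
     -X \<le> j \<and> j < p \<and> b0 < \<sigma> j \<and> \<sigma> p < \<sigma> j \<and>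
     (\<forall>i. -X \<le> i \<and> i < p \<and> b0 < \<sigma> i \<and> \<sigma> p < \<sigma> i \<longrightarrow> \<sigma> j \<le> \<sigma> i)"
  proof -
    fix \<tau> j assume a: "\<tau> \<in> perms (-X) X" "cp X b0 p \<tau> \<ge> 1" "j = ii X b0 p \<tau>" "\<sigma> = \<tau> \<circ> tr j p"
    note ip = ii_props[OF a(1) pI a(2), folded a(3)]
    have v: "\<sigma> j = \<tau> p" "\<sigma> p = \<tau> j" "\<And>i. i \<noteq> j \<Longrightarrow> i \<noteq> p \<Longrightarrow> \<sigma> i = \<tau> i"
      unfolding a(4) tr_def using ip by auto
    show "-X \<le> j \<and> j < p \<and> b0 < \<sigma> j \<and> \<sigma> p < \<sigma> j \<and>
     (\<forall>i. -X \<le> i \<and> i < p \<and> b0 < \<sigma> i \<and> \<sigma> p < \<sigma> i \<longrightarrow> \<sigma> j \<le> \<sigma> i)"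
    proof (intro conjI allI impI)
      show "-X \<le> j" "j < p" using ip by auto
      show "b0 < \<sigma> j" "\<sigma> p < \<sigma> j" using ip v by auto
      fix i assume i: "-X \<le> i \<and> i < p \<and> b0 < \<sigma> i \<and> \<sigma> p < \<sigma> i"
      show "\<sigma> j \<le> \<sigma> i"
      proof (cases "i = j")
        case True then show ?thesis by simp
      next
        case False
        then have si: "\<sigma> i = \<tau> i" using v(3)[OF False] i by auto
        show ?thesis
        proof (rule ccontr)
          assume "\<not> \<sigma> j \<le> \<sigma> i"
          then have "\<tau> i < \<tau> p" using si v by simp
          then have "\<tau> i \<le> \<tau> j" using ip(5)[of i] i si by auto
          then show False using i si v by simp
        qed
      qed
    qed
  qed
  note k1 = key[OF p1 j1_def s1] and k2 = key[OF p2 j2_def s2]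
  have "\<sigma> j1 \<le> \<sigma> j2" using k1 k2 by blast
  moreover have "\<sigma> j2 \<le> \<sigma> j1" using k1 k2 by blast
  ultimately have "\<sigma> j1 = \<sigma> j2" by simp
  moreover have "j1 \<in> {-X..X}" "j2 \<in> {-X..X}" using k1 k2 pI by auto
  ultimately have "j1 = j2" using perms_inj[OF sp] unfolding inj_on_def by blast
  have "\<tau>1 = \<sigma> \<circ> tr j1 p" unfolding s1 by simp
  also have "\<dots> = \<tau>2" unfolding s2 \<open>j1 = j2\<close> by simp
  finally show "\<tau>1 = \<tau>2" .
qed



lemma inj_step:
  fixes w :: "(int \<Rightarrow> int) \<Rightarrow> real"
  assumes pI: "-X \<le> p" "p \<le> X" and q: "0 \<le> q"
    and wnn: "\<forall>\<tau>\<in>perms (-X) X. 0 \<le> w \<tau>"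
    and wphi: "\<forall>\<tau>\<in>perms (-X) X. cp X b0 p \<tau> \<ge> 1 \<longrightarrow> w \<tau> = q * w (phi X b0 p \<tau>)"
    and Pinv: "\<forall>\<tau>\<in>perms (-X) X. cp X b0 p \<tau> \<ge> 1 \<longrightarrow> P (phi X b0 p \<tau>) = P \<tau>"
  shows "(\<Sum>\<tau>\<in>{\<tau>\<in>perms (-X) X. P \<tau> \<and> Suc j \<le> cp X b0 p \<tau>}. w \<tau>)
     \<le> q * (\<Sum>\<tau>\<in>{\<tau>\<in>perms (-X) X. P \<tau> \<and> j \<le> cp X b0 p \<tau>}. w \<tau>)"
proof -
  let ?A = "{\<tau>\<in>perms (-X) X. P \<tau> \<and> Suc j \<le> cp X b0 p \<tau>}"
  let ?B = "{\<tau>\<in>perms (-X) X. P \<tau> \<and> j \<le> cp X b0 p \<tau>}"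
  let ?f = "phi X b0 p"
  have AB: "?f ` ?A \<subseteq> ?B"
  proof
    fix s assume "s \<in> ?f ` ?A"
    then obtain \<tau> where t: "\<tau> \<in> ?A" "s = ?f \<tau>" by blast
    have tp: "\<tau> \<in> perms (-X) X" "cp X b0 p \<tau> \<ge> 1" using t by auto
    have "?f \<tau> \<in> perms (-X) X" by (rule phi_perm[OF tp(1) pI tp(2)])
    moreover have "P (?f \<tau>)" using Pinv tp t by auto
    moreover have "j \<le> cp X b0 p (?f \<tau>)" using phi_cp[OF tp(1) pI tp(2)] t by auto
    ultimately show "s \<in> ?B" using t by auto
  qed
  have inj: "inj_on ?f ?A" by (rule inj_on_subset[OF phi_inj[OF pI]]) auto
  have finB: "finite ?B" using finite_perms by simp
  have e1: "(\<Sum>\<tau>\<in>?A. w \<tau>) = q * (\<Sum>\<tau>\<in>?A. w (?f \<tau>))"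
    using wphi by (simp add: sum_distrib_left)
  have e2: "(\<Sum>\<tau>\<in>?A. w (?f \<tau>)) = (\<Sum>\<tau>\<in>?f ` ?A. w \<tau>)"
    using sum.reindex[OF inj, of w] by simp
  have e3: "(\<Sum>\<tau>\<in>?f ` ?A. w \<tau>) \<le> (\<Sum>\<tau>\<in>?B. w \<tau>)"
  proof (rule sum_mono2[OF finB AB])
    fix b assume "b \<in> ?B - ?f ` ?A"
    then have "b \<in> perms (-X) X" by (simp only: Diff_iff mem_Collect_eq)
    then show "0 \<le> w b" by (rule wnn[rule_format])
  qed
  show ?thesis unfolding e1 e2 using e3 q by (rule mult_left_mono)
qed

lemma inj_iter:
  fixes w :: "(int \<Rightarrow> int) \<Rightarrow> real"
  assumes pI: "-X \<le> p" "p \<le> X" and q: "0 \<le> q"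
    and wnn: "\<forall>\<tau>\<in>perms (-X) X. 0 \<le> w \<tau>"
    and wphi: "\<forall>\<tau>\<in>perms (-X) X. cp X b0 p \<tau> \<ge> 1 \<longrightarrow> w \<tau> = q * w (phi X b0 p \<tau>)"
    and Pinv: "\<forall>\<tau>\<in>perms (-X) X. cp X b0 p \<tau> \<ge> 1 \<longrightarrow> P (phi X b0 p \<tau>) = P \<tau>"
  shows "(\<Sum>\<tau>\<in>{\<tau>\<in>perms (-X) X. P \<tau> \<and> j \<le> cp X b0 p \<tau>}. w \<tau>)
     \<le> q ^ j * (\<Sum>\<tau>\<in>{\<tau>\<in>perms (-X) X. P \<tau>}. w \<tau>)"
proof (induction j)
  case 0 then show ?case by simp
next
  case (Suc j)
  have "(\<Sum>\<tau>\<in>{\<tau>\<in>perms (-X) X. P \<tau> \<and> Suc j \<le> cp X b0 p \<tau>}. w \<tau>)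
     \<le> q * (\<Sum>\<tau>\<in>{\<tau>\<in>perms (-X) X. P \<tau> \<and> j \<le> cp X b0 p \<tau>}. w \<tau>)"
    by (rule inj_step[OF pI q wnn wphi Pinv])
  also have "\<dots> \<le> q * (q ^ j * (\<Sum>\<tau>\<in>{\<tau>\<in>perms (-X) X. P \<tau>}. w \<tau>))"
    using Suc q by (rule mult_left_mono)
  finally show ?case by (simp add: mult.assoc)
qed

lemma geom_tail:
  fixes q :: real
  assumes q: "0 \<le> q" "q < 1" and fin: "finite D" and D: "\<forall>d\<in>D. m \<le> d"
  shows "(\<Sum>d\<in>D. q ^ d) \<le> q ^ m / (1 - q)"
proof -
  define f where "f = (\<lambda>d::nat. if m \<le> d then q ^ d else 0)"
  have "(\<lambda>i. q ^ m * q ^ i) sums (q ^ m * (1 / (1 - q)))"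
    by (rule sums_mult[OF geometric_sums]) (use q in auto)
  moreover have "\<And>i. f (i + m) = q ^ m * q ^ i" unfolding f_def by (simp add: power_add)
  ultimately have "(\<lambda>i. f (i + m)) sums (q ^ m / (1 - q))" by simp
  then have "f sums (q ^ m / (1 - q) + (\<Sum>i<m. f i))" by (simp add: sums_iff_shift)
  moreover have "(\<Sum>i<m. f i) = 0" unfolding f_def by simp
  ultimately have fs: "f sums (q ^ m / (1 - q))" by simp
  have "(\<Sum>d\<in>D. q ^ d) = (\<Sum>d\<in>D. f d)" unfolding f_def using D by simp
  also have "\<dots> \<le> suminf f"
    by (rule sum_le_suminf[OF sums_summable[OF fs] fin]) (use q in \<open>auto simp: f_def\<close>)
  also have "\<dots> = q ^ m / (1 - q)" using fs by (simp add: sums_iff)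
  finally show ?thesis .
qed

lemma height_thr:
  assumes "-X \<le> y" "y \<le> X"
  shows "height (-X) X (thr v \<tau>) y = y - 2 * int (card {x. -X \<le> x \<and> x \<le> y \<and> \<tau> x \<le> v})"
proof -
  have "(\<Sum>x\<in>{-X..y}. 1 - 2 * (if x \<le> X then thr v \<tau> x else 1)) = (\<Sum>x\<in>{-X..y}. 1 - 2 * of_bool (\<tau> x \<le> v))"
    using assms by (intro sum.cong) (auto simp: thr_def)
  also have "\<dots> = (\<Sum>x\<in>{-X..y}. 1) - 2 * (\<Sum>x\<in>{-X..y}. of_bool (\<tau> x \<le> v))"
    by (simp add: sum_subtractf sum_distrib_left)
  also have "(\<Sum>x\<in>{-X..y}. (of_bool (\<tau> x \<le> v) :: int)) = int (card ({-X..y} \<inter> {x. \<tau> x \<le> v}))"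
    by simp
  also have "{-X..y} \<inter> {x. \<tau> x \<le> v} = {x. -X \<le> x \<and> x \<le> y \<and> \<tau> x \<le> v}" by auto
  finally have s: "(\<Sum>x\<in>{-X..y}. 1 - 2 * (if x \<le> X then thr v \<tau> x else 1))
      = y + X + 1 - 2 * int (card {x. -X \<le> x \<and> x \<le> y \<and> \<tau> x \<le> v})"
    using assms by simp
  show ?thesis unfolding height_def using assms s by simp
qed

lemma card_transfer:
  assumes "\<tau> \<in> perms (-X) X"
  shows "card {x. -X \<le> x \<and> x \<le> X \<and> P (\<tau> x)} = card {v. -X \<le> v \<and> v \<le> X \<and> P v}"
proof -
  have b: "bij_betw \<tau> {-X..X} {-X..X}" using assms unfolding perms_def by auto
  have "bij_betw \<tau> {x. -X \<le> x \<and> x \<le> X \<and> P (\<tau> x)} {v. -X \<le> v \<and> v \<le> X \<and> P v}"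
  proof -
    have "inj_on \<tau> {x. -X \<le> x \<and> x \<le> X \<and> P (\<tau> x)}" using b unfolding bij_betw_def
      by (rule inj_on_subset[OF conjunct1]) auto
    moreover have "\<tau> ` {x. -X \<le> x \<and> x \<le> X \<and> P (\<tau> x)} = {v. -X \<le> v \<and> v \<le> X \<and> P v}"
    proof (rule set_eqI, rule iffI)
      fix v assume "v \<in> \<tau> ` {x. -X \<le> x \<and> x \<le> X \<and> P (\<tau> x)}"
      then obtain x where "v = \<tau> x" "x \<in> {-X..X}" "P (\<tau> x)" by auto
      then show "v \<in> {v. -X \<le> v \<and> v \<le> X \<and> P v}" using bij_betw_apply[OF b] by auto
    next
      fix v assume v: "v \<in> {v. -X \<le> v \<and> v \<le> X \<and> P v}"
      then have "v \<in> \<tau> ` {-X..X}" using b unfolding bij_betw_def by auto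
      then obtain x where "x \<in> {-X..X}" "v = \<tau> x" by auto
      then show "v \<in> \<tau> ` {x. -X \<le> x \<and> x \<le> X \<and> P (\<tau> x)}" using v by auto
    qed
    ultimately show ?thesis unfolding bij_betw_def by auto
  qed
  then show ?thesis by (rule bij_betw_same_card)
qed



definition nbb :: "int \<Rightarrow> int \<Rightarrow> int \<Rightarrow> (int \<Rightarrow> int) \<Rightarrow> nat" where
  "nbb X b0 p \<tau> = card {i. -X \<le> i \<and> i < p \<and> b0 < \<tau> i}"

lemma event_point:
  fixes N k a :: nat and X :: int
  assumes kN: "k \<le> N" and XN: "int N + int a + 1 \<le> X" and perm: "\<tau> \<in> perms (-X) X"
    and c1: "height (-X) X (thr (-X + int k - 1) \<tau>) (int N - int k + int a) = int N - int k + int a"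
    and c2: "height (-X) X (thr (-1 + int k - int N) \<tau>) (int N - int k + int a) < int N - int k - int a"
  shows "\<exists>p. -X \<le> p \<and> p \<le> X \<and> (-X + int k - 1) < \<tau> p \<and>
     int a + 1 \<le> int (nbb X (-X + int k - 1) p \<tau>) - (X - int k + int N) \<and>
     int (nbb X (-X + int k - 1) p \<tau>) - (X - int k + int N) \<le> int (cp X (-X + int k - 1) p \<tau>)"
proof -
  define b0 where "b0 = -X + int k - 1"
  define vA where "vA = -1 + int k - int N"
  define y where "y = int N - int k + int a"
  have yr: "-X \<le> y" "y \<le> X" "y < X" unfolding y_def using XN kN by auto
  have h1: "y - 2 * int (card {x. -X \<le> x \<and> x \<le> y \<and> \<tau> x \<le> b0}) = y"
    using c1 height_thr[OF yr(1,2), of b0 \<tau>] unfolding b0_def y_def by simp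
  then have "card {x. -X \<le> x \<and> x \<le> y \<and> \<tau> x \<le> b0} = 0" by simp
  moreover have "finite {x. -X \<le> x \<and> x \<le> y \<and> \<tau> x \<le> b0}" by (rule finite_subset[of _ "{-X..y}"]) auto
  ultimately have noB: "\<And>x. -X \<le> x \<Longrightarrow> x \<le> y \<Longrightarrow> b0 < \<tau> x" by fastforce
  define cA where "cA = card {x. -X \<le> x \<and> x \<le> y \<and> \<tau> x \<le> vA}"
  have "y - 2 * int cA < int N - int k - int a"
    using c2 height_thr[OF yr(1,2), of vA \<tau>] unfolding vA_def y_def cA_def by simp
  then have cA: "int a + 1 \<le> int cA" unfolding y_def by simp
  have tot: "card {x. -X \<le> x \<and> x \<le> X \<and> \<tau> x \<le> vA} = nat (vA + X + 1)"
  proof -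
    have "card {x. -X \<le> x \<and> x \<le> X \<and> \<tau> x \<le> vA} = card {v. -X \<le> v \<and> v \<le> X \<and> v \<le> vA}"
      by (rule card_transfer[OF perm])
    also have "{v. -X \<le> v \<and> v \<le> X \<and> v \<le> vA} = {-X..vA}" unfolding vA_def using XN kN by auto
    finally show ?thesis by simp
  qed
  have "\<exists>p. y < p \<and> p \<le> X \<and> vA < \<tau> p"
  proof (rule ccontr)
    assume "\<not> ?thesis"
    then have all: "\<And>p. y < p \<Longrightarrow> p \<le> X \<Longrightarrow> \<tau> p \<le> vA" by force
    have sub: "{x. -X \<le> x \<and> x \<le> y \<and> \<tau> x \<le> vA} \<union> {y<..X} \<subseteq> {x. -X \<le> x \<and> x \<le> X \<and> \<tau> x \<le> vA}"
      using all yr by auto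
    have fin: "finite {x. -X \<le> x \<and> x \<le> X \<and> \<tau> x \<le> vA}" by (rule finite_subset[of _ "{-X..X}"]) auto
    have f1: "finite {x. -X \<le> x \<and> x \<le> y \<and> \<tau> x \<le> vA}" by (rule finite_subset[of _ "{-X..y}"]) auto
    have "card ({x. -X \<le> x \<and> x \<le> y \<and> \<tau> x \<le> vA} \<union> {y<..X}) = cA + card {y<..X}"
      unfolding cA_def by (rule card_Un_disjoint[OF f1]) auto
    then have "cA + nat (X - y) \<le> nat (vA + X + 1)"
      using card_mono[OF fin sub] tot by simp
    then show False using cA yr unfolding vA_def y_def by simp
  qed
  then obtain p where p: "y < p" "p \<le> X" "vA < \<tau> p" by blast
  have pI: "-X \<le> p" using p yr by simp
  have bp: "b0 < \<tau> p" using p XN kN unfolding b0_def vA_def by simp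
  have fnb: "finite {i. -X \<le> i \<and> i < p \<and> b0 < \<tau> i}" by simp
  have "{-X..y} \<subseteq> {i. -X \<le> i \<and> i < p \<and> b0 < \<tau> i}" using noB p by auto
  then have "card {-X..y} \<le> nbb X b0 p \<tau>" unfolding nbb_def using card_mono[OF fnb] by blast
  then have nb1: "y + X + 1 \<le> int (nbb X b0 p \<tau>)" using yr by simp
  have sub2: "{i. -X \<le> i \<and> i < p \<and> b0 < \<tau> i} \<subseteq> Sset X b0 p \<tau> \<union> {i. -X \<le> i \<and> i \<le> X \<and> \<tau> p < \<tau> i}"
  proof
    fix i assume i: "i \<in> {i. -X \<le> i \<and> i < p \<and> b0 < \<tau> i}"
    have "\<tau> i \<noteq> \<tau> p" using perms_inj[OF perm] i p pI unfolding inj_on_def by force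
    then show "i \<in> Sset X b0 p \<tau> \<union> {i. -X \<le> i \<and> i \<le> X \<and> \<tau> p < \<tau> i}"
      using i p unfolding Sset_def by auto
  qed
  have fG: "finite {i. -X \<le> i \<and> i \<le> X \<and> \<tau> p < \<tau> i}" by (rule finite_subset[of _ "{-X..X}"]) auto
  have "nbb X b0 p \<tau> \<le> card (Sset X b0 p \<tau> \<union> {i. -X \<le> i \<and> i \<le> X \<and> \<tau> p < \<tau> i})"
    unfolding nbb_def by (rule card_mono[OF _ sub2]) (use finite_Sset fG in auto)
  also have "\<dots> \<le> cp X b0 p \<tau> + card {i. -X \<le> i \<and> i \<le> X \<and> \<tau> p < \<tau> i}"
    unfolding cp_def by (rule card_Un_le)
  also have "card {i. -X \<le> i \<and> i \<le> X \<and> \<tau> p < \<tau> i} = card {v. -X \<le> v \<and> v \<le> X \<and> \<tau> p < v}"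
    by (rule card_transfer[OF perm])
  also have "{v. -X \<le> v \<and> v \<le> X \<and> \<tau> p < v} = {\<tau> p + 1..X}" using p bp XN unfolding vA_def by auto
  finally have nb2': "nbb X b0 p \<tau> \<le> cp X b0 p \<tau> + nat (X - \<tau> p)" by simp
  have "\<tau> p \<in> {-X..X}" using perm pI p unfolding perms_def using bij_betw_apply by fastforce
  then have "int (nat (X - \<tau> p)) = X - \<tau> p" by simp
  then have nb2: "int (nbb X b0 p \<tau>) \<le> int (cp X b0 p \<tau>) + (X - \<tau> p)" using nb2' by linarith
  show ?thesis
  proof (intro exI conjI)
    show "-X \<le> p" "p \<le> X" using pI p by auto
    show "-X + int k - 1 < \<tau> p" using bp unfolding b0_def .
    show "int a + 1 \<le> int (nbb X (-X + int k - 1) p \<tau>) - (X - int k + int N)"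
      using nb1 unfolding b0_def y_def by simp
    show "int (nbb X (-X + int k - 1) p \<tau>) - (X - int k + int N) \<le> int (cp X (-X + int k - 1) p \<tau>)"
      using nb2 p unfolding b0_def vA_def by simp
  qed
qed



lemma phi_nbb:
  assumes "\<tau> \<in> perms (-X) X" "-X \<le> p" "p \<le> X" "cp X b0 p \<tau> \<ge> 1"
  shows "nbb X b0 p' (phi X b0 p \<tau>) = nbb X b0 p' \<tau>"
  unfolding nbb_def using phi_nb[OF assms] by simp

lemma wphi:
  assumes "\<tau> \<in> perms (-X) X" "-X \<le> p" "p \<le> X" "cp X b0 p \<tau> \<ge> 1"
  shows "Wt q X b0 \<tau> * g (bet b0 \<tau>) = q * (Wt q X b0 (phi X b0 p \<tau>) * g (bet b0 (phi X b0 p \<tau>)))"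
proof -
  have "nincB X b0 \<tau> = Suc (nincB X b0 (phi X b0 p \<tau>))" using phi_ninc[OF assms] by simp
  moreover have "phi X b0 p \<tau> \<in> perms (-X) X" by (rule phi_perm[OF assms])
  ultimately show ?thesis unfolding Wt_def phi_bet[OF assms] using assms(1) by simp
qed

lemma nbb_strict:
  assumes "p < p'" "b0 < \<tau> p" "-X \<le> p"
  shows "nbb X b0 p \<tau> < nbb X b0 p' \<tau>"
proof -
  have "{i. -X \<le> i \<and> i < p \<and> b0 < \<tau> i} \<subset> {i. -X \<le> i \<and> i < p' \<and> b0 < \<tau> i}"
    using assms by auto
  then show ?thesis unfolding nbb_def by (rule psubset_card_mono[rotated]) simp
qed

lemma main_bound:
  fixes N k a :: nat and X :: int and q :: real
  assumes q: "0 \<le> q" "q < 1" and kN: "k \<le> N" and XN: "int N + int a + 1 \<le> X" and gnn: "\<forall>b. 0 \<le> g b"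
  shows "(\<Sum>\<tau>\<in>{\<tau> \<in> perms (- X) X.
           height (- X) X (thr (- X + int k - 1) \<tau>) (int N - int k + int a) = int N - int k + int a
         \<and> height (- X) X (thr (- 1 + int k - int N) \<tau>) (int N - int k + int a) < int N - int k - int a}.
         Wt q X (-X + int k - 1) \<tau> * g (bet (-X + int k - 1) \<tau>))
     \<le> q ^ (a+1) / (1 - q) * (\<Sum>\<tau>\<in>perms (-X) X. Wt q X (-X + int k - 1) \<tau> * g (bet (-X + int k - 1) \<tau>))"
proof -
  define b0 where "b0 = -X + int k - 1"
  define K where "K = X - int k + int N"
  define w where "w = (\<lambda>\<tau>. Wt q X b0 \<tau> * g (bet b0 \<tau>))"
  define mm where "mm = (\<lambda>p \<tau>. int (nbb X b0 p \<tau>) - K)"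
  define E where "E = {\<tau> \<in> perms (- X) X.
           height (- X) X (thr (- X + int k - 1) \<tau>) (int N - int k + int a) = int N - int k + int a
         \<and> height (- X) X (thr (- 1 + int k - int N) \<tau>) (int N - int k + int a) < int N - int k - int a}"
  define I where "I = {-X..X}"
  define ind where "ind = (\<lambda>\<tau> p. if b0 < \<tau> p \<and> int a + 1 \<le> mm p \<tau> \<and> mm p \<tau> \<le> int (cp X b0 p \<tau>) then 1 else (0::real))"
  define F where "F = (\<lambda>\<tau> p. if b0 < \<tau> p \<and> int a + 1 \<le> mm p \<tau> then q ^ nat (mm p \<tau>) else (0::real))"
  define C where "C = q ^ (a+1) / (1 - q)"
  let ?P = "perms (-X) X"
  have finP: "finite ?P" by (rule finite_perms)
  have finI: "finite I" unfolding I_def by simp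
  have wnn: "\<And>\<tau>. 0 \<le> w \<tau>" unfolding w_def using Wt_bounds[of q X b0] q gnn by simp
  have Fnn: "\<And>\<tau> p. 0 \<le> F \<tau> p" unfolding F_def using q by simp
  have indnn: "\<And>\<tau> p. 0 \<le> ind \<tau> p" unfolding ind_def by simp
  have s1: "(\<Sum>\<tau>\<in>E. w \<tau>) \<le> (\<Sum>\<tau>\<in>?P. \<Sum>p\<in>I. w \<tau> * ind \<tau> p)"
  proof -
    have a1: "(\<Sum>\<tau>\<in>E. w \<tau>) \<le> (\<Sum>\<tau>\<in>E. \<Sum>p\<in>I. w \<tau> * ind \<tau> p)"
    proof (rule sum_mono)
      fix \<tau> assume t: "\<tau> \<in> E"
      have perm: "\<tau> \<in> ?P" using t unfolding E_def by simp
      have c1: "height (- X) X (thr (- X + int k - 1) \<tau>) (int N - int k + int a) = int N - int k + int a"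
        using t unfolding E_def by simp
      have c2: "height (- X) X (thr (- 1 + int k - int N) \<tau>) (int N - int k + int a) < int N - int k - int a"
        using t unfolding E_def by simp
      obtain p where p: "-X \<le> p" "p \<le> X" "b0 < \<tau> p" "int a + 1 \<le> mm p \<tau>" "mm p \<tau> \<le> int (cp X b0 p \<tau>)"
        using event_point[OF kN XN perm c1 c2] unfolding mm_def K_def b0_def by blast
      have "ind \<tau> p = 1" unfolding ind_def using p by simp
      moreover have "ind \<tau> p \<le> (\<Sum>p\<in>I. ind \<tau> p)"
        by (rule member_le_sum) (use p finI indnn in \<open>auto simp: I_def\<close>)
      ultimately have "1 \<le> (\<Sum>p\<in>I. ind \<tau> p)" by simp
      then have "w \<tau> * 1 \<le> w \<tau> * (\<Sum>p\<in>I. ind \<tau> p)" using wnn by (intro mult_left_mono) auto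
      then show "w \<tau> \<le> (\<Sum>p\<in>I. w \<tau> * ind \<tau> p)" by (simp add: sum_distrib_left)
    qed
    have a2: "(\<Sum>\<tau>\<in>E. \<Sum>p\<in>I. w \<tau> * ind \<tau> p) \<le> (\<Sum>\<tau>\<in>?P. \<Sum>p\<in>I. w \<tau> * ind \<tau> p)"
    proof (rule sum_mono2[OF finP])
      show "E \<subseteq> ?P" unfolding E_def by auto
      fix \<tau> show "0 \<le> (\<Sum>p\<in>I. w \<tau> * ind \<tau> p)" using wnn indnn by (intro sum_nonneg) simp
    qed
    show ?thesis using a1 a2 by linarith
  qed
  have s3: "(\<Sum>\<tau>\<in>?P. w \<tau> * ind \<tau> p) \<le> (\<Sum>\<tau>\<in>?P. w \<tau> * F \<tau> p)" if pI: "p \<in> I" for p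
  proof -
    have pr: "-X \<le> p" "p \<le> X" using pI by (auto simp: I_def)
    define T where "T = (\<lambda>\<tau>. mm p \<tau>) ` ?P"
    have finT: "finite T" using finP by (simp add: T_def)
    have g1: "(\<Sum>d\<in>T. \<Sum>\<tau>\<in>{\<tau>. \<tau> \<in> ?P \<and> mm p \<tau> = d}. w \<tau> * ind \<tau> p) = (\<Sum>\<tau>\<in>?P. w \<tau> * ind \<tau> p)"
      by (rule sum.group[OF finP finT]) (simp add: T_def)
    have g2: "(\<Sum>d\<in>T. \<Sum>\<tau>\<in>{\<tau>. \<tau> \<in> ?P \<and> mm p \<tau> = d}. w \<tau> * F \<tau> p) = (\<Sum>\<tau>\<in>?P. w \<tau> * F \<tau> p)"
      by (rule sum.group[OF finP finT]) (simp add: T_def)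
    have each: "(\<Sum>\<tau>\<in>{\<tau>. \<tau> \<in> ?P \<and> mm p \<tau> = d}. w \<tau> * ind \<tau> p) \<le> (\<Sum>\<tau>\<in>{\<tau>. \<tau> \<in> ?P \<and> mm p \<tau> = d}. w \<tau> * F \<tau> p)" for d
    proof (cases "int a + 1 \<le> d")
      case False
      have "(\<Sum>\<tau>\<in>{\<tau>. \<tau> \<in> ?P \<and> mm p \<tau> = d}. w \<tau> * ind \<tau> p) = 0"
        by (rule sum.neutral) (use False in \<open>auto simp: ind_def\<close>)
      moreover have "0 \<le> (\<Sum>\<tau>\<in>{\<tau>. \<tau> \<in> ?P \<and> mm p \<tau> = d}. w \<tau> * F \<tau> p)"
        using wnn Fnn by (intro sum_nonneg) simp
      ultimately show ?thesis by simp
    next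
      case True
      define j where "j = nat d"
      have dj: "d = int j" using True by (simp add: j_def)
      let ?S = "{\<tau>. \<tau> \<in> ?P \<and> mm p \<tau> = d}"
      have finS: "finite ?S" using finP by simp
      have L: "(\<Sum>\<tau>\<in>?S. w \<tau> * ind \<tau> p) = (\<Sum>\<tau>\<in>{\<tau>\<in>?P. (b0 < \<tau> p \<and> mm p \<tau> = d) \<and> j \<le> cp X b0 p \<tau>}. w \<tau>)"
      proof -
        have "(\<Sum>\<tau>\<in>?S. w \<tau> * ind \<tau> p) = (\<Sum>\<tau>\<in>?S. if b0 < \<tau> p \<and> j \<le> cp X b0 p \<tau> then w \<tau> else 0)"
        proof (rule sum.cong[OF refl])
          fix \<tau> assume "\<tau> \<in> ?S"
          then have m: "mm p \<tau> = int j" using dj by simp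
          show "w \<tau> * ind \<tau> p = (if b0 < \<tau> p \<and> j \<le> cp X b0 p \<tau> then w \<tau> else 0)"
            unfolding ind_def m using True dj by simp
        qed
        also have "\<dots> = (\<Sum>\<tau>\<in>{\<tau>\<in>?S. b0 < \<tau> p \<and> j \<le> cp X b0 p \<tau>}. w \<tau>)"
          by (rule sum.inter_filter[OF finS, symmetric])
        also have "{\<tau>\<in>?S. b0 < \<tau> p \<and> j \<le> cp X b0 p \<tau>} = {\<tau>\<in>?P. (b0 < \<tau> p \<and> mm p \<tau> = d) \<and> j \<le> cp X b0 p \<tau>}"
          by auto
        finally show ?thesis .
      qed
      have R: "(\<Sum>\<tau>\<in>?S. w \<tau> * F \<tau> p) = q ^ j * (\<Sum>\<tau>\<in>{\<tau>\<in>?P. b0 < \<tau> p \<and> mm p \<tau> = d}. w \<tau>)"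
      proof -
        have "(\<Sum>\<tau>\<in>?S. w \<tau> * F \<tau> p) = (\<Sum>\<tau>\<in>?S. q ^ j * (if b0 < \<tau> p then w \<tau> else 0))"
        proof (rule sum.cong[OF refl])
          fix \<tau> assume "\<tau> \<in> ?S"
          then have m: "mm p \<tau> = int j" using dj by simp
          show "w \<tau> * F \<tau> p = q ^ j * (if b0 < \<tau> p then w \<tau> else 0)"
            unfolding F_def m using True dj by simp
        qed
        also have "\<dots> = q ^ j * (\<Sum>\<tau>\<in>?S. if b0 < \<tau> p then w \<tau> else 0)" by (simp add: sum_distrib_left)
        also have "(\<Sum>\<tau>\<in>?S. if b0 < \<tau> p then w \<tau> else 0) = (\<Sum>\<tau>\<in>{\<tau>\<in>?S. b0 < \<tau> p}. w \<tau>)"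
          by (rule sum.inter_filter[OF finS, symmetric])
        also have "{\<tau>\<in>?S. b0 < \<tau> p} = {\<tau>\<in>?P. b0 < \<tau> p \<and> mm p \<tau> = d}" by auto
        finally show ?thesis .
      qed
      have "(\<Sum>\<tau>\<in>{\<tau>\<in>?P. (b0 < \<tau> p \<and> mm p \<tau> = d) \<and> j \<le> cp X b0 p \<tau>}. w \<tau>)
          \<le> q ^ j * (\<Sum>\<tau>\<in>{\<tau>\<in>?P. b0 < \<tau> p \<and> mm p \<tau> = d}. w \<tau>)"
      proof (rule inj_iter[OF pr q(1)])
        show "\<forall>\<tau>\<in>?P. 0 \<le> w \<tau>" using wnn by simp
        show "\<forall>\<tau>\<in>?P. 1 \<le> cp X b0 p \<tau> \<longrightarrow> w \<tau> = q * w (phi X b0 p \<tau>)"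
          unfolding w_def using wphi pr by blast
        show "\<forall>\<tau>\<in>?P. 1 \<le> cp X b0 p \<tau> \<longrightarrow> (b0 < phi X b0 p \<tau> p \<and> mm p (phi X b0 p \<tau>) = d) = (b0 < \<tau> p \<and> mm p \<tau> = d)"
          unfolding mm_def using phi_nb phi_nbb pr by simp
      qed
      then show ?thesis using L R by simp
    qed
    have "(\<Sum>d\<in>T. \<Sum>\<tau>\<in>{\<tau>. \<tau> \<in> ?P \<and> mm p \<tau> = d}. w \<tau> * ind \<tau> p) \<le> (\<Sum>d\<in>T. \<Sum>\<tau>\<in>{\<tau>. \<tau> \<in> ?P \<and> mm p \<tau> = d}. w \<tau> * F \<tau> p)"
      by (rule sum_mono) (rule each)
    then show ?thesis using g1 g2 by simp
  qed
  have s4: "(\<Sum>p\<in>I. F \<tau> p) \<le> C" if perm: "\<tau> \<in> ?P" for \<tau>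
  proof -
    define Ps where "Ps = {p\<in>I. b0 < \<tau> p \<and> int a + 1 \<le> mm p \<tau>}"
    have finPs: "finite Ps" unfolding Ps_def using finI by simp
    have e1: "(\<Sum>p\<in>I. F \<tau> p) = (\<Sum>p\<in>Ps. q ^ nat (mm p \<tau>))"
      unfolding Ps_def F_def by (simp add: sum.inter_filter[OF finI])
    have inj: "inj_on (\<lambda>p. nat (mm p \<tau>)) Ps"
    proof (rule inj_onI)
      fix p p' assume p: "p \<in> Ps" and p': "p' \<in> Ps" and e: "nat (mm p \<tau>) = nat (mm p' \<tau>)"
      have "mm p \<tau> \<ge> 0" "mm p' \<tau> \<ge> 0" using p p' unfolding Ps_def by auto
      then have "mm p \<tau> = mm p' \<tau>" using e by (metis nat_eq_iff2)
      then have nb: "nbb X b0 p \<tau> = nbb X b0 p' \<tau>" unfolding mm_def by simp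
      show "p = p'"
      proof (rule ccontr)
        assume "p \<noteq> p'"
        then consider "p < p'" | "p' < p" by linarith
        then show False
        proof cases
          case 1 then show False using nbb_strict[OF 1, of b0 \<tau> X] p nb unfolding Ps_def I_def by simp
        next
          case 2 then show False using nbb_strict[OF 2, of b0 \<tau> X] p' nb unfolding Ps_def I_def by simp
        qed
      qed
    qed
    have "(\<Sum>p\<in>Ps. q ^ nat (mm p \<tau>)) = (\<Sum>d\<in>(\<lambda>p. nat (mm p \<tau>)) ` Ps. q ^ d)"
      using sum.reindex[OF inj, of "\<lambda>d. q ^ d"] by simp
    also have "\<dots> \<le> q ^ (a+1) / (1 - q)"
      by (rule geom_tail[OF q]) (use finPs in \<open>auto simp: Ps_def\<close>)
    finally show ?thesis unfolding e1 C_def .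
  qed
  have "(\<Sum>\<tau>\<in>?P. \<Sum>p\<in>I. w \<tau> * ind \<tau> p) = (\<Sum>p\<in>I. \<Sum>\<tau>\<in>?P. w \<tau> * ind \<tau> p)" by (rule sum.swap)
  moreover have "(\<Sum>p\<in>I. \<Sum>\<tau>\<in>?P. w \<tau> * ind \<tau> p) \<le> (\<Sum>p\<in>I. \<Sum>\<tau>\<in>?P. w \<tau> * F \<tau> p)"
    by (rule sum_mono) (rule s3)
  moreover have "(\<Sum>p\<in>I. \<Sum>\<tau>\<in>?P. w \<tau> * F \<tau> p) = (\<Sum>\<tau>\<in>?P. w \<tau> * (\<Sum>p\<in>I. F \<tau> p))"
    by (simp add: sum.swap[of _ I] sum_distrib_left)
  moreover have "(\<Sum>\<tau>\<in>?P. w \<tau> * (\<Sum>p\<in>I. F \<tau> p)) \<le> (\<Sum>\<tau>\<in>?P. w \<tau> * C)"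
    by (rule sum_mono) (use s4 wnn in \<open>auto intro: mult_left_mono\<close>)
  moreover have "(\<Sum>\<tau>\<in>?P. w \<tau> * C) = C * (\<Sum>\<tau>\<in>?P. w \<tau>)" by (simp add: sum_distrib_left mult.commute)
  ultimately have "(\<Sum>\<tau>\<in>E. w \<tau>) \<le> C * (\<Sum>\<tau>\<in>?P. w \<tau>)" using s1 by linarith
  then show ?thesis unfolding E_def w_def C_def b0_def .
qed



lemma perms_sub:
  assumes "\<tau> \<in> perms (-X + int k) X" "int k \<le> 2 * X + 1"
  shows "\<tau> \<in> perms (-X) X"
proof -
  have b: "bij_betw \<tau> {-X + int k..X} {-X + int k..X}" and o: "\<forall>x. x \<notin> {-X + int k..X} \<longrightarrow> \<tau> x = x"
    using assms unfolding perms_def by auto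
  have "bij_betw \<tau> {-X..-X + int k - 1} {-X..-X + int k - 1}"
    by (rule bij_betw_cong[THEN iffD2, OF _ bij_betw_id]) (use o in auto)
  from bij_betw_combine[OF this b] have "bij_betw \<tau> ({-X..-X + int k - 1} \<union> {-X + int k..X}) ({-X..-X + int k - 1} \<union> {-X + int k..X})"
    by auto
  moreover have "{-X..-X + int k - 1} \<union> {-X + int k..X} = {-X..X}" using assms(2) by auto
  ultimately have "bij_betw \<tau> {-X..X} {-X..X}" by simp
  moreover have "\<forall>x. x \<notin> {-X..X} \<longrightarrow> \<tau> x = x" using o by auto
  ultimately show ?thesis unfolding perms_def by auto
qed

lemma perms_sub_vals:
  assumes "\<tau> \<in> perms (-X + int k) X"
  shows "\<And>x. x < -X + int k \<Longrightarrow> \<tau> x = x" "\<And>x. x > X \<Longrightarrow> \<tau> x = x"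
    "\<And>x. -X + int k \<le> x \<Longrightarrow> x \<le> X \<Longrightarrow> -X + int k \<le> \<tau> x \<and> \<tau> x \<le> X"
  using assms unfolding perms_def using bij_betw_apply by fastforce+

lemma bet_init:
  assumes "\<tau> \<in> perms (-X + int k) X"
  shows "bet (-X + int k - 1) \<tau> = (\<lambda>x. fB (-X + int k - 1) x)"
proof (rule ext)
  fix x
  show "bet (-X + int k - 1) \<tau> x = fB (-X + int k - 1) x"
  proof (cases "x < -X + int k")
    case True then show ?thesis unfolding bet_def using perms_sub_vals(1)[OF assms True] by simp
  next
    case False
    show ?thesis
    proof (cases "x \<le> X")
      case True
      then have "-X + int k \<le> \<tau> x" using perms_sub_vals(3)[OF assms] False by force
      then show ?thesis unfolding bet_def fB_def using False by auto
    next
      case False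
      then show ?thesis unfolding bet_def using perms_sub_vals(2)[OF assms] by simp
    qed
  qed
qed

lemma ninc_init:
  assumes "\<tau> \<in> perms (-X + int k) X"
  shows "nincB X (-X + int k - 1) \<tau> = ninc (-X + int k) X \<tau>"
proof -
  have iff: "\<And>i. -X \<le> i \<Longrightarrow> i \<le> X \<Longrightarrow> (-X + int k - 1 < \<tau> i) = (-X + int k \<le> i)"
  proof -
    fix i assume i: "-X \<le> i" "i \<le> X"
    show "(-X + int k - 1 < \<tau> i) = (-X + int k \<le> i)"
    proof (cases "i < -X + int k")
      case True then show ?thesis using perms_sub_vals(1)[OF assms True] by simp
    next
      case False then show ?thesis using perms_sub_vals(3)[OF assms, of i] i by auto
    qed
  qed
  have "{(i,j). -X \<le> i \<and> i < j \<and> j \<le> X \<and> -X + int k - 1 < \<tau> i \<and> -X + int k - 1 < \<tau> j \<and> \<tau> i < \<tau> j}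
     = {(i,j). -X + int k \<le> i \<and> i < j \<and> j \<le> X \<and> \<tau> i < \<tau> j}"
  proof (rule set_eqI)
    fix z :: "int \<times> int"
    obtain i j where z: "z = (i,j)" by (cases z)
    show "z \<in> {(i,j). -X \<le> i \<and> i < j \<and> j \<le> X \<and> -X + int k - 1 < \<tau> i \<and> -X + int k - 1 < \<tau> j \<and> \<tau> i < \<tau> j}
      \<longleftrightarrow> z \<in> {(i,j). -X + int k \<le> i \<and> i < j \<and> j \<le> X \<and> \<tau> i < \<tau> j}"
    proof
      assume "z \<in> {(i,j). -X \<le> i \<and> i < j \<and> j \<le> X \<and> -X + int k - 1 < \<tau> i \<and> -X + int k - 1 < \<tau> j \<and> \<tau> i < \<tau> j}"
      then have h: "-X \<le> i" "i < j" "j \<le> X" "-X + int k - 1 < \<tau> i" "\<tau> i < \<tau> j" unfolding z by auto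
      then have "-X + int k \<le> i" using iff[of i] by simp
      then show "z \<in> {(i,j). -X + int k \<le> i \<and> i < j \<and> j \<le> X \<and> \<tau> i < \<tau> j}" unfolding z using h by simp
    next
      assume "z \<in> {(i,j). -X + int k \<le> i \<and> i < j \<and> j \<le> X \<and> \<tau> i < \<tau> j}"
      then have h: "-X + int k \<le> i" "i < j" "j \<le> X" "\<tau> i < \<tau> j" unfolding z by auto
      have "-X \<le> i" using h by simp
      moreover have "-X + int k - 1 < \<tau> i" using iff[of i] h by simp
      moreover have "-X + int k - 1 < \<tau> j" using iff[of j] h by simp
      ultimately show "z \<in> {(i,j). -X \<le> i \<and> i < j \<and> j \<le> X \<and> -X + int k - 1 < \<tau> i \<and> -X + int k - 1 < \<tau> j \<and> \<tau> i < \<tau> j}"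
        unfolding z using h by simp
    qed
  qed
  then show ?thesis unfolding nincB_def ninc_def by simp
qed

lemma init_conv:
  assumes p: "\<tau> \<in> perms (-X) X" and b: "bet (-X + int k - 1) \<tau> = (\<lambda>x. fB (-X + int k - 1) x)"
  shows "\<tau> \<in> perms (-X + int k) X"
proof -
  let ?b0 = "-X + int k - 1"
  have bb: "\<And>x. fB ?b0 (\<tau> x) = fB ?b0 x" using b unfolding bet_def by metis
  have lo: "\<And>x. x \<le> ?b0 \<Longrightarrow> \<tau> x = x"
  proof -
    fix x assume x: "x \<le> ?b0"
    have "fB ?b0 (\<tau> x) = x" using bb[of x] x unfolding fB_def by simp
    then show "\<tau> x = x" using x unfolding fB_def by (auto split: if_splits)
  qed
  have hi: "\<And>x. ?b0 < x \<Longrightarrow> ?b0 < \<tau> x"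
  proof -
    fix x assume x: "?b0 < x"
    have "fB ?b0 (\<tau> x) = ?b0 + 1" using bb[of x] x unfolding fB_def by simp
    then show "?b0 < \<tau> x" unfolding fB_def by (auto split: if_splits)
  qed
  have bij: "bij_betw \<tau> {-X..X} {-X..X}" and o: "\<forall>x. x \<notin> {-X..X} \<longrightarrow> \<tau> x = x" using p unfolding perms_def by auto
  let ?B = "{-X + int k..X}"
  have inj: "inj_on \<tau> ?B" using bij unfolding bij_betw_def by (rule inj_on_subset[OF conjunct1]) auto
  have sub: "\<tau> ` ?B \<subseteq> ?B"
  proof
    fix v assume "v \<in> \<tau> ` ?B"
    then obtain x where x: "x \<in> ?B" "v = \<tau> x" by auto
    then have "x \<in> {-X..X}" by auto
    then have "\<tau> x \<in> {-X..X}" using bij_betw_apply[OF bij] by auto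
    moreover have "?b0 < \<tau> x" using hi x by auto
    ultimately show "v \<in> ?B" using x by auto
  qed
  have "\<tau> ` ?B = ?B" by (rule endo_inj_surj[OF _ sub inj]) simp
  then have "bij_betw \<tau> ?B ?B" using inj unfolding bij_betw_def by simp
  moreover have "\<forall>x. x \<notin> ?B \<longrightarrow> \<tau> x = x"
  proof (intro allI impI)
    fix x assume "x \<notin> ?B"
    then consider "x \<le> ?b0" | "X < x" by force
    then show "\<tau> x = x"
    proof cases
      case 1 then show ?thesis using lo by simp
    next
      case 2 then show ?thesis using o by auto
    qed
  qed
  ultimately show ?thesis unfolding perms_def by auto
qed

lemma mallows_prod:
  fixes k :: nat and q :: real
  assumes kX: "int k \<le> 2 * X + 1"
  defines "Z \<equiv> (\<Sum>v\<in>perms (- X + int k) X. q ^ ninc (- X + int k) X v)"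
  shows "mallows q (-X + int k) X = (\<lambda>\<tau>. Wt q X (-X + int k - 1) \<tau> *
     (\<lambda>b. if b = (\<lambda>x. fB (-X + int k - 1) x) then 1 / Z else 0) (bet (-X + int k - 1) \<tau>))"
proof (rule ext)
  fix \<tau>
  show "mallows q (-X + int k) X \<tau> = Wt q X (-X + int k - 1) \<tau> *
     (\<lambda>b. if b = (\<lambda>x. fB (-X + int k - 1) x) then 1 / Z else 0) (bet (-X + int k - 1) \<tau>)"
  proof (cases "\<tau> \<in> perms (-X + int k) X")
    case True
    show ?thesis unfolding mallows_def Wt_def Z_def using True perms_sub[OF True kX] bet_init[OF True] ninc_init[OF True]
      by simp
  next
    case False
    have "\<not> (\<tau> \<in> perms (-X) X \<and> bet (-X + int k - 1) \<tau> = (\<lambda>x. fB (-X + int k - 1) x))"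
      using init_conv False by blast
    then show ?thesis unfolding mallows_def Wt_def using False by auto
  qed
qed



lemma fin_supp_bound:
  assumes "finite S" "\<forall>\<tau>. \<tau> \<notin> S \<longrightarrow> f \<tau> = (0::real)"
  shows "\<forall>\<tau>. \<bar>f \<tau>\<bar> \<le> (\<Sum>x\<in>S. \<bar>f x\<bar>)"
proof
  fix \<tau> show "\<bar>f \<tau>\<bar> \<le> (\<Sum>x\<in>S. \<bar>f x\<bar>)"
  proof (cases "\<tau> \<in> S")
    case True then show ?thesis using assms(1) by (intro member_le_sum) auto
  next
    case False then show ?thesis using assms(2) by (simp add: sum_nonneg)
  qed
qed

lemma sqrt_bound:
  fixes q :: real assumes "0 \<le> q" "q \<le> 1"
  shows "q ^ (a+1) \<le> sqrt q ^ a"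
proof -
  have a: "0 \<le> q ^ a" "q ^ a \<le> 1" using assms by (auto simp: power_le_one)
  have "q ^ (a+1) \<le> q ^ a" using assms by (simp add: mult_left_le_one_le)
  moreover have "q ^ a \<le> sqrt (q ^ a)"
  proof (rule real_le_rsqrt)
    show "(q ^ a)\<^sup>2 \<le> q ^ a" using a by (simp add: power2_eq_square mult_left_le_one_le)
  qed
  moreover have "sqrt (q ^ a) = sqrt q ^ a" by (simp add: real_sqrt_power)
  ultimately show ?thesis by simp
qed

theorem lemma3p3:
  fixes q :: real
  assumes "0 \<le> q" and "q < 1"
  shows "\<exists>C > 0. \<forall>(N::nat) (k::nat) (a::nat) (b::real). k \<le> N \<longrightarrow>
    (\<exists>X0::int. \<forall>X \<ge> X0. \<forall>t \<ge> (0::real). \<forall>\<mu>0 :: (int \<Rightarrow> int) \<Rightarrow> real.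
      (\<forall>\<tau>. ((\<lambda>s. evolve q (- X) (int k) (mallows q (- X + int k) X) s \<tau>)
              \<longlongrightarrow> \<mu>0 \<tau>) at_top) \<longrightarrow>
      (\<Sum>\<tau>\<in>{\<tau> \<in> perms (- X) X.
           height (- X) X (thr (- X + int k - 1) \<tau>) (int N - int k + int a) = int N - int k + int a
         \<and> height (- X) X (thr (- 1 + int k - int N) \<tau>) (int N - int k + int a) < int N - int k - int a}.
         evolve q (- X) X \<mu>0 t \<tau>)
      \<le> C * sqrt q ^ a)"
proof -
  have q1: "q \<le> 1" using assms by simp
  note q = assms(1) q1
  define C where "C = 1 / (1 - q)"
  have Cpos: "C > 0" using assms by (simp add: C_def)
  show ?thesis
  proof (intro exI[of _ C] conjI allI impI)
    show "C > 0" by (rule Cpos)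
    fix N k a :: nat and b :: real
    assume kN: "k \<le> N"
    show "\<exists>X0::int. \<forall>X \<ge> X0. \<forall>t \<ge> (0::real). \<forall>\<mu>0 :: (int \<Rightarrow> int) \<Rightarrow> real.
      (\<forall>\<tau>. ((\<lambda>s. evolve q (- X) (int k) (mallows q (- X + int k) X) s \<tau>)
              \<longlongrightarrow> \<mu>0 \<tau>) at_top) \<longrightarrow>
      (\<Sum>\<tau>\<in>{\<tau> \<in> perms (- X) X.
           height (- X) X (thr (- X + int k - 1) \<tau>) (int N - int k + int a) = int N - int k + int a
         \<and> height (- X) X (thr (- 1 + int k - int N) \<tau>) (int N - int k + int a) < int N - int k - int a}.
         evolve q (- X) X \<mu>0 t \<tau>)
      \<le> C * sqrt q ^ a"
    proof (intro exI[of _ "int N + int a + 1"] allI impI)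
      fix X :: int and t :: real and \<mu>0 :: "(int \<Rightarrow> int) \<Rightarrow> real"
      assume XN: "int N + int a + 1 \<le> X" and t: "0 \<le> t"
        and lim: "\<forall>\<tau>. ((\<lambda>s. evolve q (- X) (int k) (mallows q (- X + int k) X) s \<tau>) \<longlongrightarrow> \<mu>0 \<tau>) at_top"
      define b0 where "b0 = -X + int k - 1"
      have kX: "int k \<le> 2 * X + 1" "-X \<le> -X" "int k \<le> X" using XN kN by auto
      define Z where "Z = (\<Sum>v\<in>perms (- X + int k) X. q ^ ninc (- X + int k) X v)"
      define \<rho>0 where "\<rho>0 = (\<lambda>b. if b = (\<lambda>x. fB b0 x) then 1 / Z else 0)"
      define m where "m = mallows q (-X + int k) X"
      let ?P = "perms (-X) X"
      let ?W = "Wt q X b0"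
      have mp: "m = (\<lambda>\<tau>. ?W \<tau> * \<rho>0 (bet b0 \<tau>))"
        unfolding m_def \<rho>0_def b0_def Z_def by (rule mallows_prod[OF kX(1)])
      have \<rho>0b: "\<forall>b. \<bar>\<rho>0 b\<bar> \<le> \<bar>1 / Z\<bar>" unfolding \<rho>0_def by simp
      define e where "e = (\<lambda>s. evolve q (-X) (int k) \<rho>0 s)"
      have evm: "evolve q (-X) (int k) m s \<tau> = ?W \<tau> * e s (bet b0 \<tau>)" for s \<tau>
        unfolding mp e_def by (rule evolve_prod[OF q kX(2) kX(3) \<rho>0b])
      have Znn: "0 \<le> Z" unfolding Z_def using q by (intro sum_nonneg) simp
      have mdef: "m \<tau> = (if \<tau> \<in> perms (-X + int k) X then q ^ ninc (-X + int k) X \<tau> / Z else 0)" for \<tau>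
        unfolding m_def mallows_def Z_def by (rule refl)
      have mnn: "\<forall>\<tau>. 0 \<le> m \<tau>" unfolding mdef using Znn q by simp
      have msupp: "\<forall>\<tau>. \<tau> \<notin> perms (-X + int k) X \<longrightarrow> m \<tau> = 0" unfolding mdef by simp
      have mb: "\<forall>\<tau>. \<bar>m \<tau>\<bar> \<le> (\<Sum>x\<in>perms (-X + int k) X. \<bar>m x\<bar>)"
        by (rule fin_supp_bound[OF finite_perms msupp])
      have evpos: "0 \<le> evolve q (-X) (int k) m s \<tau>" if "0 \<le> s" for s \<tau>
        by (rule evolve_pos[OF q mnn mb that])
      have lim': "((\<lambda>s. ?W \<tau> * e s (bet b0 \<tau>)) \<longlongrightarrow> \<mu>0 \<tau>) at_top" for \<tau>
        using lim[rule_format, of \<tau>] unfolding m_def[symmetric] evm .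
      have \<mu>0nn: "0 \<le> \<mu>0 \<tau>" for \<tau>
      proof (rule tendsto_lowerbound[OF lim[rule_format, of \<tau>]])
        show "\<forall>\<^sub>F s in at_top. 0 \<le> evolve q (- X) (int k) (mallows q (- X + int k) X) s \<tau>"
          unfolding eventually_at_top_linorder using evpos unfolding m_def by blast
      qed simp
      have W0: "\<mu>0 \<tau> = 0" if "?W \<tau> = 0" for \<tau>
      proof -
        have "((\<lambda>s::real. 0) \<longlongrightarrow> \<mu>0 \<tau>) at_top" using lim'[of \<tau>] that by simp
        then show ?thesis using tendsto_unique[OF _ tendsto_const] by (metis trivial_limit_at_top_linorder)
      qed
      have limdiv: "((\<lambda>s. e s (bet b0 \<tau>)) \<longlongrightarrow> \<mu>0 \<tau> / ?W \<tau>) at_top" if "?W \<tau> \<noteq> 0" for \<tau>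
      proof -
        have "((\<lambda>s. ?W \<tau> * e s (bet b0 \<tau>) / ?W \<tau>) \<longlongrightarrow> \<mu>0 \<tau> / ?W \<tau>) at_top"
          by (rule tendsto_divide[OF lim'[of \<tau>] tendsto_const that])
        moreover have "(\<lambda>s. ?W \<tau> * e s (bet b0 \<tau>) / ?W \<tau>) = (\<lambda>s. e s (bet b0 \<tau>))" using that by simp
        ultimately show ?thesis by simp
      qed
      define Q where "Q = (\<lambda>b \<sigma>. \<sigma> \<in> ?P \<and> bet b0 \<sigma> = b \<and> ?W \<sigma> \<noteq> 0)"
      define \<rho>s where "\<rho>s = (\<lambda>b. if \<exists>\<sigma>. Q b \<sigma> then \<mu>0 (SOME \<sigma>. Q b \<sigma>) / ?W (SOME \<sigma>. Q b \<sigma>) else 0)"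
      have \<mu>0eq: "\<mu>0 = (\<lambda>\<tau>. ?W \<tau> * \<rho>s (bet b0 \<tau>))"
      proof (rule ext)
        fix \<tau>
        show "\<mu>0 \<tau> = ?W \<tau> * \<rho>s (bet b0 \<tau>)"
        proof (cases "?W \<tau> = 0")
          case True then show ?thesis using W0 by simp
        next
          case False
          then have tp: "\<tau> \<in> ?P" unfolding Wt_def by (auto split: if_splits)
          have ex: "\<exists>\<sigma>. Q (bet b0 \<tau>) \<sigma>" using tp False unfolding Q_def by blast
          define \<sigma> where "\<sigma> = (SOME \<sigma>. Q (bet b0 \<tau>) \<sigma>)"
          have s: "Q (bet b0 \<tau>) \<sigma>" unfolding \<sigma>_def by (rule someI_ex[OF ex])
          then have sW: "?W \<sigma> \<noteq> 0" "bet b0 \<sigma> = bet b0 \<tau>" unfolding Q_def by auto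
          have l1: "((\<lambda>s. e s (bet b0 \<tau>)) \<longlongrightarrow> \<mu>0 \<sigma> / ?W \<sigma>) at_top"
            using limdiv[OF sW(1)] sW(2) by simp
          have "\<mu>0 \<sigma> / ?W \<sigma> = \<mu>0 \<tau> / ?W \<tau>"
            by (rule tendsto_unique[OF _ l1 limdiv[OF False]]) simp
          then have "\<rho>s (bet b0 \<tau>) = \<mu>0 \<tau> / ?W \<tau>" unfolding \<rho>s_def using ex \<sigma>_def by simp
          then show ?thesis using False by simp
        qed
      qed
      define Mx where "Mx = (\<Sum>\<sigma>\<in>?P. \<bar>\<mu>0 \<sigma> / ?W \<sigma>\<bar>)"
      have \<rho>sb: "\<forall>b. \<bar>\<rho>s b\<bar> \<le> Mx"
      proof
        fix b show "\<bar>\<rho>s b\<bar> \<le> Mx"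
        proof (cases "\<exists>\<sigma>. Q b \<sigma>")
          case True
          define \<sigma> where "\<sigma> = (SOME \<sigma>. Q b \<sigma>)"
          have "Q b \<sigma>" unfolding \<sigma>_def by (rule someI_ex[OF True])
          then have "\<sigma> \<in> ?P" unfolding Q_def by auto
          then have "\<bar>\<mu>0 \<sigma> / ?W \<sigma>\<bar> \<le> Mx" unfolding Mx_def by (intro member_le_sum) (auto simp: finite_perms)
          then show ?thesis unfolding \<rho>s_def using True \<sigma>_def by simp
        next
          case False
          then have nE: "\<not> Ex (Q b)" by blast
          have "\<rho>s b = 0" unfolding \<rho>s_def by (simp add: nE)
          moreover have "0 \<le> Mx" unfolding Mx_def by (rule sum_nonneg) simp
          ultimately show ?thesis by simp
        qed
      qed
      have \<rho>snn: "\<forall>b. 0 \<le> \<rho>s b"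
      proof
        fix b show "0 \<le> \<rho>s b"
        proof (cases "\<exists>\<sigma>. Q b \<sigma>")
          case True
          define \<sigma> where "\<sigma> = (SOME \<sigma>. Q b \<sigma>)"
          have "Q b \<sigma>" unfolding \<sigma>_def by (rule someI_ex[OF True])
          then have "?W \<sigma> \<noteq> 0" unfolding Q_def by auto
          then have "0 < ?W \<sigma>" using Wt_bounds[OF q, of X b0 \<sigma>] by simp
          then have "0 \<le> \<mu>0 \<sigma> / ?W \<sigma>" using \<mu>0nn[of \<sigma>] by simp
          then show ?thesis unfolding \<rho>s_def using True \<sigma>_def by simp
        next
          case False
          then have nE: "\<not> Ex (Q b)" by blast
          show ?thesis unfolding \<rho>s_def by (simp add: nE)
        qed
      qed
      define R where "R = evolve q (-X) X \<rho>s t"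
      have \<mu>t: "evolve q (-X) X \<mu>0 t \<tau> = ?W \<tau> * R (bet b0 \<tau>)" for \<tau>
        unfolding \<mu>0eq R_def by (rule evolve_prod[OF q order_refl order_refl \<rho>sb])
      have Rnn: "\<forall>b. 0 \<le> R b" unfolding R_def using evolve_pos[OF q \<rho>snn \<rho>sb t] by blast
      have MB: "(\<Sum>\<tau>\<in>{\<tau> \<in> perms (- X) X.
           height (- X) X (thr (- X + int k - 1) \<tau>) (int N - int k + int a) = int N - int k + int a
         \<and> height (- X) X (thr (- 1 + int k - int N) \<tau>) (int N - int k + int a) < int N - int k - int a}.
         Wt q X (-X + int k - 1) \<tau> * R (bet (-X + int k - 1) \<tau>))
       \<le> q ^ (a+1) / (1 - q) * (\<Sum>\<tau>\<in>perms (-X) X. Wt q X (-X + int k - 1) \<tau> * R (bet (-X + int k - 1) \<tau>))"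
        by (rule main_bound[OF assms kN XN Rnn])
      have \<mu>0b: "\<forall>\<tau>. \<bar>\<mu>0 \<tau>\<bar> \<le> Mx"
      proof
        fix \<tau>
        have "\<bar>\<mu>0 \<tau>\<bar> = \<bar>?W \<tau>\<bar> * \<bar>\<rho>s (bet b0 \<tau>)\<bar>" unfolding \<mu>0eq by (simp add: abs_mult)
        also have "\<dots> \<le> 1 * Mx" using Wt_bounds[OF q, of X b0 \<tau>] \<rho>sb by (intro mult_mono) auto
        finally show "\<bar>\<mu>0 \<tau>\<bar> \<le> Mx" by simp
      qed
      have sum\<mu>t: "(\<Sum>\<tau>\<in>?P. ?W \<tau> * R (bet b0 \<tau>)) = (\<Sum>\<tau>\<in>?P. \<mu>0 \<tau>)"
      proof -
        have "(\<Sum>\<tau>\<in>?P. evolve q (-X) X \<mu>0 t \<tau>) = (\<Sum>\<tau>\<in>?P. \<mu>0 \<tau>)"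
          by (rule evolve_sum[OF q _ _ \<mu>0b]) simp_all
        then show ?thesis unfolding \<mu>t .
      qed
      have lims: "((\<lambda>s. \<Sum>\<tau>\<in>?P. evolve q (-X) (int k) m s \<tau>) \<longlongrightarrow> (\<Sum>\<tau>\<in>?P. \<mu>0 \<tau>)) at_top"
        by (rule tendsto_sum) (use lim m_def in simp)
      moreover have "(\<Sum>\<tau>\<in>?P. evolve q (-X) (int k) m s \<tau>) = (\<Sum>\<tau>\<in>?P. m \<tau>)" for s
        by (rule evolve_sum[OF q kX(2) kX(3) mb])
      ultimately have "((\<lambda>s::real. \<Sum>\<tau>\<in>?P. m \<tau>) \<longlongrightarrow> (\<Sum>\<tau>\<in>?P. \<mu>0 \<tau>)) at_top" by simp
      then have s\<mu>0: "(\<Sum>\<tau>\<in>?P. \<mu>0 \<tau>) = (\<Sum>\<tau>\<in>?P. m \<tau>)"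
        using tendsto_unique[OF _ tendsto_const] by (metis trivial_limit_at_top_linorder)
      have "(\<Sum>\<tau>\<in>?P. m \<tau>) = (\<Sum>\<tau>\<in>perms (-X + int k) X. m \<tau>)"
      proof (rule sum.mono_neutral_right[OF finite_perms])
        show "perms (-X + int k) X \<subseteq> ?P" using perms_sub kX(1) by blast
        show "\<forall>i\<in>?P - perms (-X + int k) X. m i = 0" using msupp by blast
      qed
      also have "\<dots> = (\<Sum>\<tau>\<in>perms (-X + int k) X. q ^ ninc (- X + int k) X \<tau> / Z)"
        unfolding mdef by (rule sum.cong) auto
      also have "\<dots> = (\<Sum>\<tau>\<in>perms (-X + int k) X. q ^ ninc (- X + int k) X \<tau>) / Z"
        by (rule sum_divide_distrib[symmetric])
      also have "\<dots> = Z / Z" unfolding Z_def ..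
      also have "\<dots> \<le> 1" by (cases "Z = 0") auto
      finally have mass: "(\<Sum>\<tau>\<in>?P. ?W \<tau> * R (bet b0 \<tau>)) \<le> 1" using sum\<mu>t s\<mu>0 by simp
      have cq: "0 \<le> q ^ (a+1) / (1 - q)" using assms by simp
      have "(\<Sum>\<tau>\<in>{\<tau> \<in> perms (- X) X.
           height (- X) X (thr (- X + int k - 1) \<tau>) (int N - int k + int a) = int N - int k + int a
         \<and> height (- X) X (thr (- 1 + int k - int N) \<tau>) (int N - int k + int a) < int N - int k - int a}.
         evolve q (- X) X \<mu>0 t \<tau>)
        = (\<Sum>\<tau>\<in>{\<tau> \<in> perms (- X) X.
           height (- X) X (thr (- X + int k - 1) \<tau>) (int N - int k + int a) = int N - int k + int a
         \<and> height (- X) X (thr (- 1 + int k - int N) \<tau>) (int N - int k + int a) < int N - int k - int a}.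
         Wt q X (-X + int k - 1) \<tau> * R (bet (-X + int k - 1) \<tau>))"
        unfolding \<mu>t b0_def ..
      also have "\<dots> \<le> q ^ (a+1) / (1 - q) * (\<Sum>\<tau>\<in>perms (-X) X. Wt q X (-X + int k - 1) \<tau> * R (bet (-X + int k - 1) \<tau>))"
        by (rule MB)
      also have "\<dots> \<le> q ^ (a+1) / (1 - q) * 1"
        using mass cq unfolding b0_def by (intro mult_left_mono) auto
      also have "\<dots> \<le> C * sqrt q ^ a"
        unfolding C_def using sqrt_bound[OF q, of a] assms by (simp add: divide_right_mono)
      finally show "(\<Sum>\<tau>\<in>{\<tau> \<in> perms (- X) X.
           height (- X) X (thr (- X + int k - 1) \<tau>) (int N - int k + int a) = int N - int k + int a
         \<and> height (- X) X (thr (- 1 + int k - int N) \<tau>) (int N - int k + int a) < int N - int k - int a}.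
         evolve q (- X) X \<mu>0 t \<tau>) \<le> C * sqrt q ^ a" .
    qed
  qed
qed


end
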